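(* Let $G_\infty=(k^{\mathbb{Z}})^{I}$ be the set of all sequences $(\beta^{(1)},\beta^{(2)},\dots)$ with each $\beta^{(i)}=(\beta^{(i)}_n)_{n\in\mathbb{Z}}\in k^{\mathbb{Z}}$, $I=\{1,2,\dots\}$. Define $\Phi:G_\infty\to\mathrm{Aut}_*(H)$ by letting $\Phi(\beta^{(1)},\beta^{(2)},\dots)$ be the linear map $\phi$ with $\phi(x^n)=x^n$ and $\phi(x^ny^m)=\phi^{(1)}_{\beta^{(1)}}\circ\phi^{(2)}_{\beta^{(2)}}\circ\cdots\circ\phi^{(m)}_{\beta^{(m)}}(x^ny^m)$ for $n\in\mathbb{Z}$, $m\geq1$. Then $\Phi$ is a well-defined bijection from $G_\infty$ onto $\mathrm{Aut}_*(H)$; consequently, equipping $G_\infty$ with the group structure transported along $\Phi$, there is a group isomorphism $\mathrm{Aut}_*(H)\cong G_\infty$.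
   Context: Let $k$ be a field and $0\neq q\in k$ not a root of unity. Let $H=k_q[x,x^{-1},y]$ be the $k$-algebra generated by $x,x^{-1},y$ subject to $xx^{-1}=x^{-1}x=1$, $yx=qxy$, a Hopf algebra with $\Delta(x)=x\otimes x$, $\Delta(y)=y\otimes x+1\otimes y$, $\varepsilon(x)=1$, $\varepsilon(y)=0$. The elements $x^ny^m$ ($n\in\mathbb{Z}$, $m\in\mathbb{N}$) form a $k$-basis. Notation: $(n)_q=1+q+\dots+q^{n-1}$, $(n)!_q=(n)_q\cdots(1)_q$, $\binom{m}{i}_q=\frac{(m)!_q}{(i)!_q(m-i)!_q}$; for $0<j\le m$, $(m,j)_q=\prod_{i=0}^{j-1}(m-i)_q$, and $(m,0)_q=1$; for $1\le s\le m$ and $1\le i\le m/s$, $\binom{m}{s}_{q,i}=\prod_{j=0}^{i-1}\binom{m-js}{s}_q$. For $\beta\in k^{\mathbb{Z}}$: $\beta_{n,0}=1$, $\beta_{n,j}=\prod_{i=0}^{j-1}\beta_{n+i}$; $\beta_{n,s;0}=1$, $\beta_{n,s;j}=\prod_{i=0}^{j-1}\beta_{n+is}$. For $\beta\in k^{\mathbb{Z}}$ let $\phi^{(1)}_\beta$ be the linear map $H\to H$ with $\phi^{(1)}_\beta(x^ny^m)=x^ny^m+\sum_{l=0}^{m-1}(m,m-l)_q\big(\beta_{n,m-l}x^{n+m-l}-\beta_{n,m-l-1}\beta_{n+m-1}x^{n+m-l-1}\big)y^l$. For $s\geq2$ let $\phi^{(s)}_\beta$ be the linear map with $\phi^{(s)}_\beta(x^ny^m)=x^ny^m$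 if $0\le m<s$ and, for $m\geq s$, $\phi^{(s)}_\beta(x^ny^m)=x^ny^m+\sum_{1\le i\le\lfloor m/s\rfloor}\binom{m}{s}_{q,i}\big(\beta_{n,s;i}x^{n+is}-\beta_{n,s;i-1}\beta_{n+m-s}x^{n+is-s}\big)y^{m-is}$. $\mathrm{Aut}_*(H)$ is the group (under composition) of coalgebra automorphisms $\phi$ of $H$ with $\phi(x^n)=x^n$ for all $n$ and such that for each $n\in\mathbb{Z}$ there is $\beta_n\in k$ with $\phi(x^ny)=x^ny+\beta_n(x^{n+1}-x^n)$. *)

theory Defs
  imports Main "HOL-Library.Function_Algebras"
begin

text \<open>Elements of H = k_q[x,x^-1,y] are finitely supported coefficient functions
  on the basis x^n y^m, indexed by (n,m) :: int \<times> nat.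
  Elements of H \<otimes> H are finitely supported functions on pairs of basis indices.\<close>

type_synonym 'k hvec = "int \<times> nat \<Rightarrow> 'k"
type_synonym 'k tvec = "(int \<times> nat) \<times> (int \<times> nat) \<Rightarrow> 'k"

definition smult :: "'k::times \<Rightarrow> ('a \<Rightarrow> 'k) \<Rightarrow> ('a \<Rightarrow> 'k)" where
  "smult a v = (\<lambda>c. a * v c)"

definition hsupp :: "('a \<Rightarrow> 'k::zero) \<Rightarrow> 'a set" where
  "hsupp v = {b. v b \<noteq> 0}"

definition Hsp :: "('k::zero) hvec set" where
  "Hsp = {v. finite (hsupp v)}"

definition bas :: "int \<Rightarrow> nat \<Rightarrow> ('k::{zero,one}) hvec" where
  "bas n m = (\<lambda>c. if c = (n, m) then 1 else 0)"

text \<open>A linear map H \<rightarrow> H is given by its values on the basis; ext is its linear extension.\<close>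
definition ext :: "(int \<Rightarrow> nat \<Rightarrow> ('k::comm_ring_1) hvec) \<Rightarrow> 'k hvec \<Rightarrow> 'k hvec" where
  "ext \<phi> v = (\<lambda>c. \<Sum>b\<in>hsupp v. v b * \<phi> (fst b) (snd b) c)"

definition qint :: "'k::field \<Rightarrow> nat \<Rightarrow> 'k" where
  "qint q n = (\<Sum>i<n. q ^ i)"
definition qfact :: "'k::field \<Rightarrow> nat \<Rightarrow> 'k" where
  "qfact q n = (\<Prod>i\<in>{1..n}. qint q i)"
definition qbinom :: "'k::field \<Rightarrow> nat \<Rightarrow> nat \<Rightarrow> 'k" where
  "qbinom q m i = qfact q m / (qfact q i * qfact q (m - i))"
definition qfall :: "'k::field \<Rightarrow> nat \<Rightarrow> nat \<Rightarrow> 'k" where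
  "qfall q m j = (\<Prod>i<j. qint q (m - i))"
definition qbinom_iter :: "'k::field \<Rightarrow> nat \<Rightarrow> nat \<Rightarrow> nat \<Rightarrow> 'k" where
  "qbinom_iter q m s i = (\<Prod>j<i. qbinom q (m - j * s) s)"

definition bprod :: "(int \<Rightarrow> 'k::comm_ring_1) \<Rightarrow> int \<Rightarrow> nat \<Rightarrow> 'k" where
  "bprod \<beta> n j = (\<Prod>i<j. \<beta> (n + int i))"
definition bprods :: "(int \<Rightarrow> 'k::comm_ring_1) \<Rightarrow> int \<Rightarrow> nat \<Rightarrow> nat \<Rightarrow> 'k" where
  "bprods \<beta> n s j = (\<Prod>i<j. \<beta> (n + int i * int s))"

definition phi1 :: "'k::field \<Rightarrow> (int \<Rightarrow> 'k) \<Rightarrow> int \<Rightarrow> nat \<Rightarrow> 'k hvec" where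
  "phi1 q \<beta> n m = bas n m +
     (\<Sum>l<m. smult (qfall q m (m - l))
        (smult (bprod \<beta> n (m - l)) (bas (n + int m - int l) l)
         - smult (bprod \<beta> n (m - l - 1) * \<beta> (n + int m - 1)) (bas (n + int m - int l - 1) l)))"

definition phis :: "'k::field \<Rightarrow> nat \<Rightarrow> (int \<Rightarrow> 'k) \<Rightarrow> int \<Rightarrow> nat \<Rightarrow> 'k hvec" where
  "phis q s \<beta> n m = (if m < s then bas n m else bas n m +
     (\<Sum>i\<in>{1..m div s}. smult (qbinom_iter q m s i)
        (smult (bprods \<beta> n s i) (bas (n + int (i * s)) (m - i * s))
         - smult (bprods \<beta> n s (i - 1) * \<beta> (n + int m - int s))
                 (bas (n + int (i * s) - int s) (m - i * s)))))"

definition phi :: "'k::field \<Rightarrow> nat \<Rightarrow> (int \<Rightarrow> 'k) \<Rightarrow> int \<Rightarrow> nat \<Rightarrow> 'k hvec" where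
  "phi q s \<beta> = (if s = 1 then phi1 q \<beta> else phis q s \<beta>)"

text \<open>PhiChain q beta j v = phi^(1) o ... o phi^(j) applied to v (phi^(j) applied first)\<close>
primrec PhiChain :: "'k::field \<Rightarrow> (nat \<Rightarrow> int \<Rightarrow> 'k) \<Rightarrow> nat \<Rightarrow> 'k hvec \<Rightarrow> 'k hvec" where
  "PhiChain q \<beta> 0 v = v"
| "PhiChain q \<beta> (Suc j) v = PhiChain q \<beta> j (ext (phi q (Suc j) (\<beta> (Suc j))) v)"

text \<open>G_infinity: sequences beta^(1), beta^(2), ...; index 0 is unused and normalised to 0.\<close>
definition G_inf :: "(nat \<Rightarrow> int \<Rightarrow> 'k::zero) set" where
  "G_inf = {\<beta>. \<beta> 0 = (\<lambda>_. 0)}"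

definition PhiMap :: "'k::field \<Rightarrow> (nat \<Rightarrow> int \<Rightarrow> 'k) \<Rightarrow> int \<Rightarrow> nat \<Rightarrow> 'k hvec" where
  "PhiMap q \<beta> = (\<lambda>n m. if m = 0 then bas n 0 else PhiChain q \<beta> m (bas n m))"

text \<open>(x^a1 y^a2)(x^b1 y^b2) = q^(a2*b1) x^(a1+b1) y^(a2+b2), since y x = q x y.\<close>
definition midx :: "int \<times> nat \<Rightarrow> int \<times> nat \<Rightarrow> int \<times> nat" where
  "midx a b = (fst a + fst b, snd a + snd b)"
definition mcoef :: "'k::field \<Rightarrow> int \<times> nat \<Rightarrow> int \<times> nat \<Rightarrow> 'k" where
  "mcoef q a b = q powi (int (snd a) * fst b)"

definition tb :: "int \<times> nat \<Rightarrow> int \<times> nat \<Rightarrow> ('k::{zero,one}) tvec" where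
  "tb a b = (\<lambda>c. if c = (a, b) then 1 else 0)"

definition tmult :: "'k::field \<Rightarrow> 'k tvec \<Rightarrow> 'k tvec \<Rightarrow> 'k tvec" where
  "tmult q U V = (\<lambda>c. \<Sum>a\<in>hsupp U. \<Sum>b\<in>hsupp V.
      if midx (fst a) (fst b) = fst c \<and> midx (snd a) (snd b) = snd c
      then U a * V b * mcoef q (fst a) (fst b) * mcoef q (snd a) (snd b) else 0)"

primrec tpow :: "'k::field \<Rightarrow> 'k tvec \<Rightarrow> nat \<Rightarrow> 'k tvec" where
  "tpow q V 0 = tb (0, 0) (0, 0)"
| "tpow q V (Suc m) = tmult q (tpow q V m) V"

text \<open>Delta(x^n y^m) = Delta(x)^n Delta(y)^m = (x^n \<otimes> x^n)(y \<otimes> x + 1 \<otimes> y)^m\<close>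
definition Delta :: "'k::field \<Rightarrow> int \<Rightarrow> nat \<Rightarrow> 'k tvec" where
  "Delta q n m = tmult q (tb (n, 0) (n, 0)) (tpow q (tb (0, 1) (1, 0) + tb (0, 0) (0, 1)) m)"

definition Delta_ext :: "'k::field \<Rightarrow> 'k hvec \<Rightarrow> 'k tvec" where
  "Delta_ext q v = (\<Sum>b\<in>hsupp v. smult (v b) (Delta q (fst b) (snd b)))"

definition tens :: "('k::times) hvec \<Rightarrow> 'k hvec \<Rightarrow> 'k tvec" where
  "tens u v = (\<lambda>c. u (fst c) * v (snd c))"

definition tmap :: "(int \<Rightarrow> nat \<Rightarrow> ('k::comm_ring_1) hvec) \<Rightarrow> 'k tvec \<Rightarrow> 'k tvec" where
  "tmap \<phi> T = (\<Sum>c\<in>hsupp T.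
      smult (T c) (tens (\<phi> (fst (fst c)) (snd (fst c))) (\<phi> (fst (snd c)) (snd (snd c)))))"

definition epsb :: "int \<Rightarrow> nat \<Rightarrow> 'k::{zero,one}" where
  "epsb n m = (if m = 0 then 1 else 0)"
definition eps_ext :: "('k::comm_ring_1) hvec \<Rightarrow> 'k" where
  "eps_ext v = (\<Sum>b\<in>hsupp v. v b * epsb (fst b) (snd b))"

definition is_coalg_aut :: "'k::field \<Rightarrow> (int \<Rightarrow> nat \<Rightarrow> 'k hvec) \<Rightarrow> bool" where
  "is_coalg_aut q \<phi> \<longleftrightarrow>
     (\<forall>n m. \<phi> n m \<in> Hsp) \<and> bij_betw (ext \<phi>) Hsp Hsp \<and>
     (\<forall>n m. Delta_ext q (\<phi> n m) = tmap \<phi> (Delta q n m)) \<and>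
     (\<forall>n m. eps_ext (\<phi> n m) = epsb n m)"

definition Aut_star :: "'k::field \<Rightarrow> (int \<Rightarrow> nat \<Rightarrow> 'k hvec) set" where
  "Aut_star q = {\<phi>. is_coalg_aut q \<phi> \<and> (\<forall>n. \<phi> n 0 = bas n 0) \<and>
      (\<forall>n. \<exists>b. \<phi> n 1 = bas n 1 + smult b (bas (n + 1) 0 - bas n 0))}"

end

theory Submission
  imports Defs
begin

lemma sum_apply_fun: "(sum f A) x = sum (\<lambda>i. f i x) A"
  by (induction A rule: infinite_finite_induct) auto

lemma smult_apply[simp]: "smult a v c = a * v c"
  by (simp add: smult_def)

lemma bas_apply: "bas n m c = (if c = (n,m) then 1 else 0)"
  by (simp add: bas_def)

lemma hsupp_bas[simp]: "hsupp (bas n m :: ('k::zero_neq_one) hvec) = {(n,m)}"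
  by (auto simp: hsupp_def bas_def)

lemma Hsp_iff: "v \<in> Hsp \<longleftrightarrow> finite (hsupp v)"
  by (simp add: Hsp_def)

lemma Hsp_subset: "finite A \<Longrightarrow> hsupp v \<subseteq> A \<Longrightarrow> v \<in> Hsp"
  by (simp add: Hsp_def finite_subset)

lemma hsupp_iff: "b \<in> hsupp v \<longleftrightarrow> v b \<noteq> 0"
  by (simp add: hsupp_def)

lemma bas_Hsp[simp]: "(bas n m :: ('k::zero_neq_one) hvec) \<in> Hsp"
  by (simp add: Hsp_def)

lemma Hsp_add[simp]: "u \<in> Hsp \<Longrightarrow> v \<in> Hsp \<Longrightarrow> (u + v :: ('k::monoid_add) hvec) \<in> Hsp"
  by (rule Hsp_subset[of "hsupp u \<union> hsupp v"]) (auto simp: Hsp_def hsupp_def)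

lemma Hsp_diff[simp]: "u \<in> Hsp \<Longrightarrow> v \<in> Hsp \<Longrightarrow> (u - v :: ('k::group_add) hvec) \<in> Hsp"
  by (rule Hsp_subset[of "hsupp u \<union> hsupp v"]) (auto simp: Hsp_def hsupp_def)

lemma Hsp_smult[simp]: "v \<in> Hsp \<Longrightarrow> (smult a v :: ('k::mult_zero) hvec) \<in> Hsp"
  by (rule Hsp_subset[of "hsupp v"]) (auto simp: Hsp_def hsupp_def)

lemma Hsp_sum[simp]: "(\<And>i. i \<in> I \<Longrightarrow> f i \<in> Hsp) \<Longrightarrow> (sum f I :: ('k::comm_monoid_add) hvec) \<in> Hsp"
proof (induction I rule: infinite_finite_induct)
  case (infinite A) then show ?case by (simp add: Hsp_def hsupp_def)
next
  case empty then show ?case by (simp add: Hsp_def hsupp_def)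
next
  case (insert x F) then show ?case
    by (simp, intro Hsp_subset[of "hsupp (f x) \<union> hsupp (sum f F)"]) (auto simp: Hsp_def hsupp_def)
qed

lemma sum_hsupp_superset:
  assumes "finite A" "hsupp v \<subseteq> A"
  shows "(\<Sum>b\<in>hsupp v. v b * f b) = (\<Sum>b\<in>A. v b * (f b :: 'k::semiring_0))"
  by (rule sum.mono_neutral_left) (use assms in \<open>auto simp: hsupp_def\<close>)

lemma ext_superset:
  assumes "finite A" "hsupp v \<subseteq> A"
  shows "ext \<phi> v c = (\<Sum>b\<in>A. v b * \<phi> (fst b) (snd b) c)"
  unfolding ext_def using sum_hsupp_superset[OF assms] by simp

lemma ext_bas[simp]: "ext \<phi> (bas n m) = \<phi> n m"
  by (rule ext) (simp add: ext_def, simp add: bas_def)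

lemma ext_Hsp:
  assumes "v \<in> Hsp" "\<And>n m. \<phi> n m \<in> Hsp"
  shows "ext \<phi> v \<in> Hsp"
proof (rule Hsp_subset[of "\<Union>b\<in>hsupp v. hsupp (\<phi> (fst b) (snd b))"])
  show "finite (\<Union>b\<in>hsupp v. hsupp (\<phi> (fst b) (snd b)))" using assms by (auto simp: Hsp_def)
  show "hsupp (ext \<phi> v) \<subseteq> (\<Union>b\<in>hsupp v. hsupp (\<phi> (fst b) (snd b)))"
  proof
    fix c assume "c \<in> hsupp (ext \<phi> v)"
    then have "(\<Sum>b\<in>hsupp v. v b * \<phi> (fst b) (snd b) c) \<noteq> 0" by (simp add: hsupp_def ext_def)
    then obtain b where "b \<in> hsupp v" "v b * \<phi> (fst b) (snd b) c \<noteq> 0"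
      by (meson sum.neutral)
    then show "c \<in> (\<Union>b\<in>hsupp v. hsupp (\<phi> (fst b) (snd b)))" by (intro UN_I[of b]) (auto simp: hsupp_def)
  qed
qed

lemma ext_add:
  assumes "u \<in> Hsp" "v \<in> Hsp"
  shows "ext \<phi> (u + v) = ext \<phi> u + ext \<phi> v"
proof (rule ext)
  fix c
  let ?A = "hsupp u \<union> hsupp v"
  have f: "finite ?A" using assms by (simp add: Hsp_def)
  have "ext \<phi> (u+v) c = (\<Sum>b\<in>?A. (u+v) b * \<phi> (fst b) (snd b) c)"
    by (rule ext_superset[OF f]) (auto simp: hsupp_def)
  also have "\<dots> = (\<Sum>b\<in>?A. u b * \<phi> (fst b) (snd b) c) + (\<Sum>b\<in>?A. v b * \<phi> (fst b) (snd b) c)"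
    by (simp add: distrib_right sum.distrib)
  also have "\<dots> = ext \<phi> u c + ext \<phi> v c"
    using ext_superset[OF f, of u] ext_superset[OF f, of v] by auto
  finally show "ext \<phi> (u + v) c = (ext \<phi> u + ext \<phi> v) c" by simp
qed

lemma ext_diff:
  assumes "u \<in> Hsp" "v \<in> Hsp"
  shows "ext \<phi> (u - v) = ext \<phi> u - ext \<phi> v"
proof (rule ext)
  fix c
  let ?A = "hsupp u \<union> hsupp v"
  have f: "finite ?A" using assms by (simp add: Hsp_def)
  have "ext \<phi> (u-v) c = (\<Sum>b\<in>?A. (u-v) b * \<phi> (fst b) (snd b) c)"
    by (rule ext_superset[OF f]) (auto simp: hsupp_def)
  also have "\<dots> = (\<Sum>b\<in>?A. u b * \<phi> (fst b) (snd b) c) - (\<Sum>b\<in>?A. v b * \<phi> (fst b) (snd b) c)"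
    by (simp add: left_diff_distrib sum_subtractf)
  also have "\<dots> = ext \<phi> u c - ext \<phi> v c"
    using ext_superset[OF f, of u] ext_superset[OF f, of v] by auto
  finally show "ext \<phi> (u - v) c = (ext \<phi> u - ext \<phi> v) c" by simp
qed

lemma ext_smult:
  assumes "u \<in> Hsp"
  shows "ext \<phi> (smult a u) = smult a (ext \<phi> u)"
proof (rule ext)
  fix c
  have f: "finite (hsupp u)" using assms by (simp add: Hsp_def)
  have "ext \<phi> (smult a u) c = (\<Sum>b\<in>hsupp u. (smult a u) b * \<phi> (fst b) (snd b) c)"
    by (rule ext_superset[OF f]) (auto simp: hsupp_def)
  also have "\<dots> = a * ext \<phi> u c"
    by (simp add: ext_def sum_distrib_left mult.assoc)
  finally show "ext \<phi> (smult a u) c = smult a (ext \<phi> u) c" by simp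
qed

lemma ext_comp:
  assumes v: "v \<in> Hsp" and g: "\<And>n m. g n m \<in> Hsp"
  shows "ext f (ext g v) = ext (\<lambda>n m. ext f (g n m)) v"
proof (rule ext)
  fix c
  let ?A = "\<Union>x\<in>hsupp v. hsupp (g (fst x) (snd x))"
  have fA: "finite ?A" using v g by (auto simp: Hsp_def)
  have sub: "hsupp (ext g v) \<subseteq> ?A"
  proof
    fix b assume "b \<in> hsupp (ext g v)"
    then have "(\<Sum>x\<in>hsupp v. v x * g (fst x) (snd x) b) \<noteq> 0" by (simp add: hsupp_def ext_def)
    then obtain x where "x \<in> hsupp v" "v x * g (fst x) (snd x) b \<noteq> 0"
      by (meson sum.neutral)
    then show "b \<in> ?A" by (intro UN_I[of x]) (auto simp: hsupp_def)
  qed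
  have "ext f (ext g v) c = (\<Sum>b\<in>?A. ext g v b * f (fst b) (snd b) c)"
    by (rule ext_superset[OF fA sub])
  also have "\<dots> = (\<Sum>b\<in>?A. \<Sum>x\<in>hsupp v. v x * g (fst x) (snd x) b * f (fst b) (snd b) c)"
    by (simp add: ext_def sum_distrib_right)
  also have "\<dots> = (\<Sum>x\<in>hsupp v. v x * (\<Sum>b\<in>?A. g (fst x) (snd x) b * f (fst b) (snd b) c))"
    by (subst sum.swap) (simp add: sum_distrib_left mult.assoc)
  also have "\<dots> = (\<Sum>x\<in>hsupp v. v x * ext f (g (fst x) (snd x)) c)"
  proof (rule sum.cong[OF refl])
    fix x assume x: "x \<in> hsupp v"
    have "ext f (g (fst x) (snd x)) c = (\<Sum>b\<in>?A. g (fst x) (snd x) b * f (fst b) (snd b) c)"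
      by (rule ext_superset[OF fA]) (use x in auto)
    then show "v x * (\<Sum>b\<in>?A. g (fst x) (snd x) b * f (fst b) (snd b) c) = v x * ext f (g (fst x) (snd x)) c"
      by simp
  qed
  also have "\<dots> = ext (\<lambda>n m. ext f (g n m)) v c" by (simp add: ext_def)
  finally show "ext f (ext g v) c = ext (\<lambda>n m. ext f (g n m)) v c" .
qed

lemma ext_bas_id:
  assumes "v \<in> Hsp" shows "ext bas v = v"
proof (rule ext)
  fix c
  have "ext bas v c = (\<Sum>b\<in>hsupp v. v b * (if c = b then 1 else 0))"
    by (simp add: ext_def bas_def prod_eq_iff eq_commute)
  also have "\<dots> = v c"
    using assms by (simp add: Hsp_def if_distrib hsupp_def cong: if_cong) 
  finally show "ext bas v c = v c" .
qed


lemma sum_if_single: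
  assumes "finite A"
  shows "(\<Sum>i\<in>A. if i = k \<and> P then f i else 0) = (if k \<in> A \<and> P then f k else 0)"
  using assms by (cases P) (simp_all add: sum.delta')

lemma tmult_superset:
  assumes "finite A" "finite B" "hsupp U \<subseteq> A" "hsupp V \<subseteq> B"
  shows "tmult q U V c = (\<Sum>a\<in>A. \<Sum>b\<in>B. if midx (fst a) (fst b) = fst c \<and> midx (snd a) (snd b) = snd c
      then U a * V b * mcoef q (fst a) (fst b) * mcoef q (snd a) (snd b) else 0)"
proof -
  have "tmult q U V c = (\<Sum>a\<in>A. \<Sum>b\<in>hsupp V. if midx (fst a) (fst b) = fst c \<and> midx (snd a) (snd b) = snd c
      then U a * V b * mcoef q (fst a) (fst b) * mcoef q (snd a) (snd b) else 0)"
    unfolding tmult_def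
    apply (rule sum.mono_neutral_left)
    using assms by (auto simp: hsupp_def intro!: sum.neutral) (metis mult_zero_left)
  also have "\<dots> = (\<Sum>a\<in>A. \<Sum>b\<in>B. if midx (fst a) (fst b) = fst c \<and> midx (snd a) (snd b) = snd c
      then U a * V b * mcoef q (fst a) (fst b) * mcoef q (snd a) (snd b) else 0)"
    by (intro sum.cong refl sum.mono_neutral_left) (use assms in \<open>auto simp: hsupp_def\<close>)
  finally show ?thesis .
qed

context
  fixes q :: "'k::field"
  assumes qnz: "q \<noteq> 0" and qroot: "\<forall>n::nat. n > 0 \<longrightarrow> q ^ n \<noteq> 1"
begin

lemma qint_0[simp]: "qint q 0 = 0" and qint_1[simp]: "qint q 1 = 1" and qint_Suc0[simp]: "qint q (Suc 0) = 1"
  by (simp_all add: qint_def)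

lemma qint_Suc: "qint q (Suc n) = qint q n + q ^ n"
  by (simp add: qint_def)

lemma qint_add: "qint q (a + b) = qint q a + q ^ a * qint q b"
  by (induction b) (simp_all add: qint_Suc algebra_simps power_add)

lemma qint_mult: "qint q n * (q - 1) = q ^ n - 1"
  by (induction n) (simp_all add: qint_Suc algebra_simps qint_def)

lemma qint_nz: "n > 0 \<Longrightarrow> qint q n \<noteq> 0"
proof
  assume n: "n > 0" and z: "qint q n = 0"
  have "q ^ n - 1 = 0" using qint_mult[of n] z by simp
  then show False using qroot n by simp
qed


lemma qfact_0[simp]: "qfact q 0 = 1"
  by (simp add: qfact_def)

lemma qfact_Suc: "qfact q (Suc n) = qfact q n * qint q (Suc n)"
  unfolding qfact_def by (simp add: atLeastAtMostSuc_conv mult.commute)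

lemma qfact_1[simp]: "qfact q 1 = 1"
  by (simp add: qfact_def qint_def)

lemma qfact_nz: "qfact q n \<noteq> 0"
  by (induction n) (simp_all add: qfact_Suc qint_nz)

lemma qbinom_0[simp]: "qbinom q m 0 = 1"
  by (simp add: qbinom_def qfact_nz)

lemma qbinom_self[simp]: "qbinom q m m = 1"
  by (simp add: qbinom_def qfact_nz)

lemma qbinom_1: "qbinom q (Suc p) 1 = qint q (Suc p)"
  by (simp add: qbinom_def qfact_nz qfact_Suc)

lemma pascal_aux:
  fixes F J D X Y p :: "'a::field"
  assumes "J \<noteq> 0" "D \<noteq> 0" "X \<noteq> 0" "Y \<noteq> 0"
  shows "F * (X + p * Y) / ((J * Y) * (D * X)) = F / ((J * Y) * D) + p * (F / (J * (D * X)))"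
  using assms by (simp add: field_simps)

lemma qbinom_pascal:
  assumes "j < m"
  shows "qbinom q (Suc m) (Suc j) = qbinom q m (Suc j) + q ^ (m - j) * qbinom q m j"
proof -
  define d where "d = m - Suc j"
  have d: "m = j + Suc d" using assms by (simp add: d_def)
  have mj: "m - j = Suc d" "m - Suc j = d" "Suc m - Suc j = Suc d" using d by auto
  have f1: "qfact q (Suc d) = qfact q d * qint q (Suc d)" by (rule qfact_Suc)
  have f2: "qfact q (Suc j) = qfact q j * qint q (Suc j)" by (rule qfact_Suc)
  have f3: "qfact q (Suc m) = qfact q m * qint q (Suc m)" by (rule qfact_Suc)
  have key: "qint q (Suc m) = qint q (Suc d) + q ^ (Suc d) * qint q (Suc j)"
    using qint_add[of "Suc d" "Suc j"] d by (simp add: add.commute)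
  have nz: "qfact q d \<noteq> 0" "qfact q j \<noteq> 0" "qfact q m \<noteq> 0" "qint q (Suc d) \<noteq> 0" "qint q (Suc j) \<noteq> 0"
    by (simp_all add: qfact_nz qint_nz)
  show ?thesis
    unfolding qbinom_def mj f1 f2 f3 key using nz pascal_aux[of "qfact q j" "qfact q d" "qint q (Suc d)" "qint q (Suc j)" "qfact q m" "q ^ Suc d"]
    by (simp add: mult.assoc)
qed



end

context
  fixes q :: "'k::field"
  assumes qnz: "q \<noteq> 0" and qroot: "\<forall>n::nat. n > 0 \<longrightarrow> q ^ n \<noteq> 1"
begin

lemmas qb_simps[simp] = qbinom_0[OF qnz qroot] qbinom_self[OF qnz qroot]
lemmas qfact_nz' = qfact_nz[OF qnz qroot]
lemmas qint_nz' = qint_nz[OF qnz qroot]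

lemma tpow_pt:
  assumes hV: "V = tb (0,1) (1,0) + tb (0,0) (0,1)"
  shows "tpow q V m c = (if fst (fst c) = 0 \<and> snd (fst c) + snd (snd c) = m
      \<and> fst (snd c) = int (snd (fst c)) then qbinom q m (snd (fst c)) else 0)"
proof (induction m arbitrary: c)
  case 0
  then show ?case by (cases c) (auto simp: tb_def qbinom_0[OF qnz qroot])
next
  case (Suc m)
  let ?V = V
  let ?P = "tpow q ?V m"
  let ?g = "\<lambda>i::nat. ((0::int, i), (int i, m - i))"
  let ?A = "?g ` {..m}"
  let ?B = "{((0::int,1::nat),(1::int,0::nat)), ((0,0),(0,1))}"
  have sA: "hsupp ?P \<subseteq> ?A"
  proof
    fix x assume "x \<in> hsupp ?P"
    then have "?P x \<noteq> 0" by (simp add: hsupp_def)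
    then have "fst (fst x) = 0 \<and> snd (fst x) + snd (snd x) = m \<and> fst (snd x) = int (snd (fst x))"
      using Suc.IH[of x] by (auto split: if_splits)
    then show "x \<in> ?A"
      by (intro image_eqI[of _ _ "snd (fst x)"]) (auto simp: prod_eq_iff)
  qed
  have sB: "hsupp ?V \<subseteq> ?B" by (auto simp: hV hsupp_def tb_def split: if_splits)
  have V1: "V ((0,Suc 0),(1,0)) = 1" and V2: "V ((0,0),(0,Suc 0)) = 1" by (simp_all add: hV tb_def)
  have inj: "inj_on ?g {..m}" by (auto simp: inj_on_def)
  obtain x1 j x2 l where c: "c = ((x1, j), (x2, l))" by (metis prod.collapse)
  have "tpow q ?V (Suc m) c = tmult q ?P ?V c" by simp
  also have "\<dots> = (\<Sum>a\<in>?A. \<Sum>b\<in>?B. if midx (fst a) (fst b) = fst c \<and> midx (snd a) (snd b) = snd c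
      then ?P a * ?V b * mcoef q (fst a) (fst b) * mcoef q (snd a) (snd b) else 0)"
    by (rule tmult_superset) (use sA sB in auto)
  also have "\<dots> = (\<Sum>i\<le>m. (if (0, Suc i) = (x1, j) \<and> (int i + 1, m - i) = (x2, l) then qbinom q m i * q ^ (m - i) else 0)
        + (if (0, i) = (x1, j) \<and> (int i, Suc (m - i)) = (x2, l) then qbinom q m i else 0))"
    by (subst sum.reindex[OF inj]) (auto simp: Suc.IH c V1 V2 midx_def mcoef_def intro!: sum.cong)
  also have "\<dots> = (\<Sum>i\<le>m. (if i = j - 1 \<and> (x1 = 0 \<and> j \<ge> 1 \<and> x2 = int j \<and> l = m - (j - 1)) then qbinom q m i * q ^ (m - i) else 0))
        + (\<Sum>i\<le>m. (if i = j \<and> (x1 = 0 \<and> x2 = int j \<and> l = Suc (m - j)) then qbinom q m i else 0))"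
    unfolding sum.distrib by (intro arg_cong2[where f="(+)"] sum.cong refl) auto
  also have "\<dots> = (if j - 1 \<le> m \<and> (x1 = 0 \<and> j \<ge> 1 \<and> x2 = int j \<and> l = m - (j - 1)) then qbinom q m (j-1) * q ^ (m - (j-1)) else 0)
        + (if j \<le> m \<and> (x1 = 0 \<and> x2 = int j \<and> l = Suc (m - j)) then qbinom q m j else 0)"
    by (simp only: sum_if_single finite_atMost atMost_iff)
  also have "\<dots> = (if x1 = 0 \<and> j + l = Suc m \<and> x2 = int j then qbinom q (Suc m) j else 0)"
  proof (cases "x1 = 0 \<and> j + l = Suc m \<and> x2 = int j")
    case True
    show ?thesis
    proof (cases j)
      case 0
      have c1: "\<not> (j - 1 \<le> m \<and> (x1 = 0 \<and> j \<ge> 1 \<and> x2 = int j \<and> l = m - (j - 1)))" using 0 by simp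
      have c2: "j \<le> m \<and> (x1 = 0 \<and> x2 = int j \<and> l = Suc (m - j))" using 0 True by simp
      show ?thesis using True by (simp only: c1 c2 if_True if_False) (simp add: 0)
    next
      case (Suc j')
      show ?thesis
      proof (cases "j' = m")
        case jm: True
        have c1: "j - 1 \<le> m \<and> (x1 = 0 \<and> j \<ge> 1 \<and> x2 = int j \<and> l = m - (j - 1))" using Suc jm True by simp
        have c2: "\<not> (j \<le> m \<and> (x1 = 0 \<and> x2 = int j \<and> l = Suc (m - j)))" using Suc jm by simp
        show ?thesis using True by (simp only: c1 c2 if_True if_False) (simp add: Suc jm)
      next
        case False
        then have jm: "j' < m" using True Suc by simp
        have c1: "j - 1 \<le> m \<and> (x1 = 0 \<and> j \<ge> 1 \<and> x2 = int j \<and> l = m - (j - 1))" using Suc jm True by auto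
        have c2: "j \<le> m \<and> (x1 = 0 \<and> x2 = int j \<and> l = Suc (m - j))" using Suc jm True by auto
        have p: "qbinom q (Suc m) (Suc j') = qbinom q m (Suc j') + q ^ (m - j') * qbinom q m j'"
          by (rule qbinom_pascal[OF qnz qroot jm])
        show ?thesis using True by (simp only: c1 c2 if_True if_False) (use jm in \<open>simp add: Suc p Suc_diff_Suc\<close>)
      qed
    qed
  next
    case False
    have c1: "\<not> (j - 1 \<le> m \<and> (x1 = 0 \<and> j \<ge> 1 \<and> x2 = int j \<and> l = m - (j - 1)))" using False by auto
    have c2: "\<not> (j \<le> m \<and> (x1 = 0 \<and> x2 = int j \<and> l = Suc (m - j)))" using False by auto
    show ?thesis by (simp only: c1 c2 False if_False) simp
  qed
  finally show ?case by (simp add: c)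
qed

lemma Delta_pt:
  "Delta q n m c = (if fst (fst c) = n \<and> snd (fst c) + snd (snd c) = m
      \<and> fst (snd c) = n + int (snd (fst c)) then qbinom q m (snd (fst c)) else 0)"
proof -
  define V :: "'k tvec" where "V = tb (0,1) (1,0) + tb (0,0) (0,1)"
  let ?V = V
  let ?P = "tpow q ?V m"
  let ?g = "\<lambda>i::nat. ((0::int, i), (int i, m - i))"
  let ?B = "?g ` {..m}"
  let ?A = "{((n, 0::nat), (n, 0::nat))}"
  have tp: "\<And>c. ?P c = (if fst (fst c) = 0 \<and> snd (fst c) + snd (snd c) = m
      \<and> fst (snd c) = int (snd (fst c)) then qbinom q m (snd (fst c)) else 0)"
    by (rule tpow_pt) (simp add: V_def)
  have sB: "hsupp ?P \<subseteq> ?B"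
  proof
    fix x assume "x \<in> hsupp ?P"
    then have "?P x \<noteq> 0" by (simp add: hsupp_def)
    then have "fst (fst x) = 0 \<and> snd (fst x) + snd (snd x) = m \<and> fst (snd x) = int (snd (fst x))"
      using tp[of x] by (auto split: if_splits)
    then show "x \<in> ?B"
      by (intro image_eqI[of _ _ "snd (fst x)"]) (auto simp: prod_eq_iff)
  qed
  have sA: "hsupp (tb (n, 0) (n, 0) :: 'k tvec) \<subseteq> ?A" by (auto simp: hsupp_def tb_def split: if_splits)
  have inj: "inj_on ?g {..m}" by (auto simp: inj_on_def)
  obtain x1 j x2 l where c: "c = ((x1, j), (x2, l))" by (metis prod.collapse)
  have "Delta q n m c = tmult q (tb (n, 0) (n, 0)) ?P c" by (simp add: Delta_def V_def)
  also have "\<dots> = (\<Sum>a\<in>?A. \<Sum>b\<in>?B. if midx (fst a) (fst b) = fst c \<and> midx (snd a) (snd b) = snd c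
      then tb (n, 0) (n, 0) a * ?P b * mcoef q (fst a) (fst b) * mcoef q (snd a) (snd b) else 0)"
    by (rule tmult_superset) (use sA sB in auto)
  also have "\<dots> = (\<Sum>i\<le>m. if i = j \<and> (x1 = n \<and> x2 = n + int j \<and> l = m - j) then qbinom q m i else 0)"
    by (subst sum.reindex[OF inj]) (auto simp: tp c midx_def mcoef_def tb_def simp del: tpow.simps intro!: sum.cong)
  also have "\<dots> = (if fst (fst c) = n \<and> snd (fst c) + snd (snd c) = m
      \<and> fst (snd c) = n + int (snd (fst c)) then qbinom q m (snd (fst c)) else 0)"
    by (subst sum_if_single) (auto simp: c)
  finally show ?thesis .
qed

lemma Delta_ext_pt:
  assumes v: "v \<in> Hsp"
  shows "Delta_ext q v ((a, j), (b, l)) = (if b = a + int j then v (a, j + l) * qbinom q (j + l) j else 0)"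
proof -
  have "Delta_ext q v ((a, j), (b, l)) = (\<Sum>x\<in>hsupp v. v x * Delta q (fst x) (snd x) ((a, j), (b, l)))"
    by (simp add: Delta_ext_def sum_apply_fun)
  also have "\<dots> = (\<Sum>x\<in>hsupp v. if x = (a, j + l) \<and> b = a + int j then v x * qbinom q (j + l) j else 0)"
    by (intro sum.cong refl) (auto simp: Delta_pt)
  also have "\<dots> = (if b = a + int j then v (a, j + l) * qbinom q (j + l) j else 0)"
    using v by (cases "(a, j + l) \<in> hsupp v") (auto simp: Hsp_def hsupp_def sum.delta')
  finally show ?thesis .
qed

lemma tmap_Delta_pt:
  "tmap \<phi> (Delta q n m) c = (\<Sum>i\<le>m. qbinom q m i * \<phi> n i (fst c) * \<phi> (n + int i) (m - i) (snd c))"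
proof -
  let ?g = "\<lambda>i::nat. ((n, i), (n + int i, m - i))"
  have inj: "inj_on ?g {..m}" by (auto simp: inj_on_def)
  have sub: "hsupp (Delta q n m) \<subseteq> ?g ` {..m}"
  proof
    fix x assume "x \<in> hsupp (Delta q n m)"
    then have "Delta q n m x \<noteq> 0" by (simp add: hsupp_def)
    then have "fst (fst x) = n \<and> snd (fst x) + snd (snd x) = m \<and> fst (snd x) = n + int (snd (fst x))"
      by (auto simp: Delta_pt split: if_splits)
    then show "x \<in> ?g ` {..m}"
      by (intro image_eqI[of _ _ "snd (fst x)"]) (auto simp: prod_eq_iff)
  qed
  have "tmap \<phi> (Delta q n m) c = (\<Sum>x\<in>hsupp (Delta q n m). Delta q n m x *
      (\<phi> (fst (fst x)) (snd (fst x)) (fst c) * \<phi> (fst (snd x)) (snd (snd x)) (snd c)))"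
    by (simp add: tmap_def sum_apply_fun tens_def)
  also have "\<dots> = (\<Sum>x\<in>?g ` {..m}. Delta q n m x *
      (\<phi> (fst (fst x)) (snd (fst x)) (fst c) * \<phi> (fst (snd x)) (snd (snd x)) (snd c)))"
    by (rule sum.mono_neutral_left) (use sub in \<open>auto simp: hsupp_def\<close>)
  also have "\<dots> = (\<Sum>i\<le>m. qbinom q m i * \<phi> n i (fst c) * \<phi> (n + int i) (m - i) (snd c))"
    by (subst sum.reindex[OF inj]) (auto simp: Delta_pt mult.assoc intro!: sum.cong)
  finally show ?thesis .
qed

end

definition idm :: "int \<Rightarrow> int \<Rightarrow> 'k::{zero,one}" where
  "idm i j = (if i = j then 1 else 0)"

definition mm :: "(int \<Rightarrow> int \<Rightarrow> 'k::comm_ring_1) \<Rightarrow> (int \<Rightarrow> int \<Rightarrow> 'k) \<Rightarrow> int \<Rightarrow> int \<Rightarrow> 'k" where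
  "mm A B i j = (\<Sum>k\<in>{i..j}. A i k * B k j)"

lemma mm_assoc: "mm (mm A B) C i j = mm A (mm B C) i j"
proof -
  have "mm (mm A B) C i j = (\<Sum>k\<in>{i..j}. \<Sum>u\<in>{u\<in>{i..j}. u \<le> k}. A i u * B u k * C k j)"
    unfolding mm_def sum_distrib_right
    by (intro sum.cong refl) (auto intro!: sum.cong)
  also have "\<dots> = (\<Sum>u\<in>{i..j}. \<Sum>k\<in>{k\<in>{i..j}. u \<le> k}. A i u * B u k * C k j)"
    by (rule sum.swap_restrict) auto
  also have "\<dots> = mm A (mm B C) i j"
    unfolding mm_def sum_distrib_left
    by (intro sum.cong refl) (auto simp: mult.assoc intro!: sum.cong)
  finally show ?thesis .
qed

lemma mm_cong:
  assumes "\<And>k. i \<le> k \<Longrightarrow> k \<le> j \<Longrightarrow> A i k = A' i k" "\<And>k. i \<le> k \<Longrightarrow> k \<le> j \<Longrightarrow> B k j = B' k j"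
  shows "mm A B i j = mm A' B' i j"
  unfolding mm_def using assms by (intro sum.cong) auto

lemma mm_idm_left: 
  assumes "i \<le> j" shows "mm idm C i j = C i j"
proof -
  have "mm idm C i j = (\<Sum>k\<in>{i..j}. if i = k then C k j else 0)"
    unfolding mm_def by (intro sum.cong) (auto simp: idm_def)
  then show ?thesis using assms by (simp add: sum.delta)
qed

lemma mm_idm_right:
  assumes "i \<le> j" shows "mm C idm i j = C i j"
proof -
  have "mm C idm i j = (\<Sum>k\<in>{i..j}. if j = k then C i k else 0)"
    unfolding mm_def by (intro sum.cong) (auto simp: idm_def)
  then show ?thesis using assms by (simp add: sum.delta)
qed

lemma mm_diag: "mm A B i i = A i i * B i i"
  by (simp add: mm_def)

lemma mm_empty: "j < i \<Longrightarrow> mm A B i j = 0"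
  by (simp add: mm_def)

lemma inv_comp:
  assumes h2: "\<And>i j. i \<le> j \<Longrightarrow> mm S2 R2 i j = idm i j"
    and h1: "\<And>i j. i \<le> j \<Longrightarrow> mm S1 R1 i j = idm i j"
    and ij: "i \<le> j"
  shows "mm (mm S1 S2) (mm R2 R1) i j = idm i j"
proof -
  have "mm (mm S1 S2) (mm R2 R1) i j = mm S1 (mm S2 (mm R2 R1)) i j" by (rule mm_assoc)
  also have "\<dots> = mm S1 R1 i j"
  proof (rule mm_cong)
    fix k assume k: "i \<le> k" "k \<le> j"
    have "mm S2 (mm R2 R1) k j = mm (mm S2 R2) R1 k j" by (rule mm_assoc[symmetric])
    also have "\<dots> = mm idm R1 k j" by (rule mm_cong) (simp_all add: h2)
    also have "\<dots> = R1 k j" using k by (simp add: mm_idm_left)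
    finally show "mm S2 (mm R2 R1) k j = R1 k j" .
  qed simp
  also have "\<dots> = idm i j" using h1 ij by simp
  finally show ?thesis .
qed

lemma sum_nat_shift: "(\<Sum>l\<le>m. h (a + int l)) = (\<Sum>c\<in>{a..a + int m}. h c)"
proof -
  have inj: "inj_on (\<lambda>l. a + int l) {..m}" by (auto simp: inj_on_def)
  have im: "(\<lambda>l. a + int l) ` {..m} = {a..a + int m}"
  proof
    show "{a..a + int m} \<subseteq> (\<lambda>l. a + int l) ` {..m}"
    proof
      fix c assume "c \<in> {a..a + int m}"
      then show "c \<in> (\<lambda>l. a + int l) ` {..m}" by (intro image_eqI[of _ _ "nat (c - a)"]) auto
    qed
  qed auto
  show ?thesis using sum.reindex[OF inj, of h] im by simp
qed

lemma sum_restrict_sub: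
  assumes "finite A" "B \<subseteq> A"
  shows "(\<Sum>x\<in>A. if x \<in> B then f x else 0) = (\<Sum>x\<in>B. f x)"
  using sum.inter_restrict[OF assms(1), of f B] assms(2) by (simp add: Int_absorb1)

definition cf :: "'k::field \<Rightarrow> (int \<Rightarrow> int \<Rightarrow> 'k) \<Rightarrow> (int \<Rightarrow> int \<Rightarrow> 'k) \<Rightarrow> int \<Rightarrow> nat \<Rightarrow> 'k hvec" where
  "cf q R S n m = (\<lambda>c. if n \<le> fst c \<and> fst c + int (snd c) \<le> n + int m
     then qfact q m / qfact q (snd c) * R n (fst c) * S (fst c + int (snd c)) (n + int m) else 0)"

lemma cf_supp: "hsupp (cf q R S n m) \<subseteq> {n..n + int m} \<times> {..m}"
  by (auto simp: cf_def hsupp_def split: if_splits)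

lemma cf_Hsp: "cf q R S n m \<in> Hsp"
  by (rule Hsp_subset[OF _ cf_supp]) simp

context
  fixes q :: "'k::field"
  assumes qnz: "q \<noteq> 0" and qroot: "\<forall>n::nat. n > 0 \<longrightarrow> q ^ n \<noteq> 1"
begin

lemmas qb_simps3[simp] = qbinom_0[OF qnz qroot] qbinom_self[OF qnz qroot]
lemmas qfact_nz3 = qfact_nz[OF qnz qroot]
lemmas qint_nz3 = qint_nz[OF qnz qroot]
lemma qfact_0'[simp]: "qfact q 0 = 1" by (simp add: qfact_def)

lemma cf_idm: "cf q idm idm n m = bas n m"
  by (rule ext) (auto simp: cf_def idm_def bas_def qfact_nz3)

lemma cf_comp: "ext (cf q R1 S1) (cf q R2 S2 n m) = cf q (mm R2 R1) (mm S1 S2) n m"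
proof (rule ext)
  fix c
  obtain a' :: int and l' :: nat where c: "c = (a', l')" by (cases c)
  define K where "K = qfact q m / qfact q l'"
  define Y where "Y = mm S1 S2 (a' + int l') (n + int m)"
  define H where "H = (\<lambda>a c. if n \<le> a \<and> a \<le> a' \<and> a' + int l' \<le> c \<and> c \<le> n + int m
      then K * (R2 n a * R1 a a') * (S1 (a' + int l') c * S2 c (n + int m)) else 0)"
  have "ext (cf q R1 S1) (cf q R2 S2 n m) c
      = (\<Sum>b\<in>{n..n + int m} \<times> {..m}. cf q R2 S2 n m b * cf q R1 S1 (fst b) (snd b) c)"
    by (rule ext_superset[OF _ cf_supp]) simp
  also have "\<dots> = (\<Sum>a\<in>{n..n + int m}. \<Sum>l\<le>m. cf q R2 S2 n m (a, l) * cf q R1 S1 a l c)"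
    by (simp add: sum.cartesian_product split_beta)
  also have "\<dots> = (\<Sum>a\<in>{n..n + int m}. \<Sum>l\<le>m. H a (a + int l))"
  proof (intro sum.cong refl)
    fix a l
    have nz: "qfact q l \<noteq> 0" by (rule qfact_nz3)
    show "cf q R2 S2 n m (a, l) * cf q R1 S1 a l c = H a (a + int l)"
      using nz by (auto simp: cf_def H_def c K_def)
  qed
  also have "\<dots> = (\<Sum>a\<in>{n..n + int m}. \<Sum>c\<in>{a..a + int m}. H a c)"
    by (simp add: sum_nat_shift)
  also have "\<dots> = (\<Sum>a\<in>{n..n + int m}. if a \<le> a' then K * (R2 n a * R1 a a') * Y else 0)"
  proof (intro sum.cong refl)
    fix a assume a: "a \<in> {n..n + int m}"
    show "(\<Sum>c\<in>{a..a + int m}. H a c) = (if a \<le> a' then K * (R2 n a * R1 a a') * Y else 0)"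
    proof (cases "a \<le> a'")
      case True
      have "(\<Sum>c\<in>{a..a + int m}. H a c) = (\<Sum>c\<in>{a..a + int m}. if c \<in> {a' + int l'..n + int m} then
          K * (R2 n a * R1 a a') * (S1 (a' + int l') c * S2 c (n + int m)) else 0)"
        using a True by (intro sum.cong refl) (auto simp: H_def)
      also have "\<dots> = (\<Sum>c\<in>{a' + int l'..n + int m}. K * (R2 n a * R1 a a') * (S1 (a' + int l') c * S2 c (n + int m)))"
        by (rule sum_restrict_sub) (use a True in auto)
      also have "\<dots> = K * (R2 n a * R1 a a') * Y"
        by (simp add: Y_def mm_def sum_distrib_left)
      finally show ?thesis using True by simp
    next
      case False
      then show ?thesis by (simp add: H_def)
    qed
  qed
  also have "\<dots> = K * mm R2 R1 n a' * Y"
  proof (cases "a' \<le> n + int m")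
    case True
    have "(\<Sum>a\<in>{n..n + int m}. if a \<le> a' then K * (R2 n a * R1 a a') * Y else 0)
        = (\<Sum>a\<in>{n..n + int m}. if a \<in> {n..a'} then K * (R2 n a * R1 a a') * Y else 0)"
      by (intro sum.cong refl) auto
    also have "\<dots> = (\<Sum>a\<in>{n..a'}. K * (R2 n a * R1 a a') * Y)"
      by (rule sum_restrict_sub) (use True in auto)
    also have "\<dots> = K * mm R2 R1 n a' * Y"
      by (simp add: mm_def sum_distrib_left sum_distrib_right mult.assoc)
    finally show ?thesis .
  next
    case False
    then have Y0: "Y = 0" by (simp add: Y_def mm_empty)
    show ?thesis unfolding Y0 by (simp only: mult_zero_right if_cancel sum.neutral_const)
  qed
  also have "\<dots> = cf q (mm R2 R1) (mm S1 S2) n m c"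
    by (auto simp: cf_def c K_def Y_def mm_empty)
  finally show "ext (cf q R1 S1) (cf q R2 S2 n m) c = cf q (mm R2 R1) (mm S1 S2) n m c" .
qed

lemma reorder6: "(Q::'a::comm_ring_1) * (X * Y * Z) * (U * V * W) = (Q * X * U) * (Y * W) * (Z * V)"
  by (simp add: ac_simps)

lemma cf_coalg:
  assumes inv: "\<And>i j. i \<le> j \<Longrightarrow> mm S R i j = idm i j"
  shows "Delta_ext q (cf q R S n m) = tmap (cf q R S) (Delta q n m)"
proof (rule ext)
  fix c
  obtain a :: int and j :: nat and b :: int and l :: nat where c: "c = ((a, j), (b, l))"
    by (metis prod.collapse)
  define Kj where "Kj = qfact q m / (qfact q j * qfact q l)"
  define F where "F = (\<lambda>k. Kj * (R n a * S (b + int l) (n + int m)) * (S (a + int j) k * R k b))"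
  define T where "T = (\<lambda>k. if n \<le> a \<and> a + int j \<le> k \<and> k \<le> b \<and> b + int l \<le> n + int m then F k else 0)"
  have "tmap (cf q R S) (Delta q n m) c = (\<Sum>i\<le>m. qbinom q m i * cf q R S n i (a, j) * cf q R S (n + int i) (m - i) (b, l))"
    by (simp add: tmap_Delta_pt[OF qnz qroot] c)
  also have "\<dots> = (\<Sum>i\<le>m. T (n + int i))"
  proof (intro sum.cong refl)
    fix i assume i: "i \<in> {..m}"
    have nz: "qfact q i \<noteq> 0" "qfact q j \<noteq> 0" "qfact q l \<noteq> 0" "qfact q (m - i) \<noteq> 0" "qfact q m \<noteq> 0"
      by (simp_all add: qfact_nz3)
    have eq: "qbinom q m i * (qfact q i / qfact q j) * (qfact q (m - i) / qfact q l) = Kj"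
      using nz by (simp add: qbinom_def Kj_def field_simps)
    have im: "n + int i + int (m - i) = n + int m" using i by simp
    show "qbinom q m i * cf q R S n i (a, j) * cf q R S (n + int i) (m - i) (b, l) = T (n + int i)"
    proof (cases "n \<le> a \<and> a + int j \<le> n + int i \<and> n + int i \<le> b \<and> b + int l \<le> n + int m")
      case True
      have "qbinom q m i * cf q R S n i (a, j) * cf q R S (n + int i) (m - i) (b, l)
        = qbinom q m i * (qfact q i / qfact q j * R n a * S (a + int j) (n + int i)) *
          (qfact q (m - i) / qfact q l * R (n + int i) b * S (b + int l) (n + int m))"
        using True by (simp add: cf_def im)
      also have "\<dots> = Kj * (R n a * S (b + int l) (n + int m)) * (S (a + int j) (n + int i) * R (n + int i) b)"
        by (simp only: reorder6 eq)
      also have "\<dots> = T (n + int i)" using True by (simp add: T_def F_def)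
      finally show ?thesis .
    next
      case False
      then show ?thesis by (auto simp: cf_def T_def im)
    qed
  qed
  also have "\<dots> = (\<Sum>k\<in>{n..n + int m}. T k)"
    by (rule sum_nat_shift)
  also have "\<dots> = (if n \<le> a \<and> b + int l \<le> n + int m then Kj * (R n a * S (b + int l) (n + int m)) * mm S R (a + int j) b else 0)"
  proof (cases "n \<le> a \<and> b + int l \<le> n + int m")
    case True
    have "(\<Sum>k\<in>{n..n + int m}. T k) = (\<Sum>k\<in>{n..n + int m}. if k \<in> {a + int j..b} then F k else 0)"
      using True by (intro sum.cong refl) (auto simp: T_def)
    also have "\<dots> = (\<Sum>k\<in>{a + int j..b}. F k)"
      by (rule sum_restrict_sub) (use True in auto)
    also have "\<dots> = Kj * (R n a * S (b + int l) (n + int m)) * mm S R (a + int j) b"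
      by (simp add: F_def mm_def sum_distrib_left)
    finally show ?thesis using True by simp
  next
    case False
    have T0: "\<And>k. T k = 0" using False unfolding T_def by auto
    show ?thesis unfolding T0 if_not_P[OF False] by simp
  qed
  also have "\<dots> = Delta_ext q (cf q R S n m) c"
  proof (cases "b = a + int j")
    case True
    have nz: "qfact q j \<noteq> 0" "qfact q l \<noteq> 0" "qfact q (j + l) \<noteq> 0"
      by (simp_all add: qfact_nz3)
    have mm1: "mm S R (a + int j) b = 1" using inv[of "a + int j" b] True by (simp add: idm_def)
    have eq: "qfact q m / qfact q (j + l) * qbinom q (j + l) j = Kj"
      using nz by (simp add: qbinom_def Kj_def field_simps)
    have "Delta_ext q (cf q R S n m) c = cf q R S n m (a, j + l) * qbinom q (j + l) j"
      using True by (simp add: Delta_ext_pt[OF qnz qroot cf_Hsp] c)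
    also have "\<dots> = (if n \<le> a \<and> b + int l \<le> n + int m then Kj * (R n a * S (b + int l) (n + int m)) else 0)"
      using True by (auto simp: cf_def eq[symmetric] ac_simps)
    finally show ?thesis by (simp add: mm1)
  next
    case False
    have mm0: "mm S R (a + int j) b = 0"
    proof (cases "a + int j \<le> b")
      case True then show ?thesis using inv[OF True] False by (simp add: idm_def)
    next
      case False then show ?thesis by (simp add: mm_empty)
    qed
    show ?thesis using False by (simp add: Delta_ext_pt[OF qnz qroot cf_Hsp] c mm0)
  qed
  finally show "Delta_ext q (cf q R S n m) c = tmap (cf q R S) (Delta q n m) c" ..
qed

lemma cf_eps:
  assumes inv: "\<And>i j. i \<le> j \<Longrightarrow> mm R S i j = idm i j"
  shows "eps_ext (cf q R S n m) = epsb n m"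
proof -
  have "eps_ext (cf q R S n m) = (\<Sum>b\<in>{n..n + int m} \<times> {..m}. cf q R S n m b * epsb (fst b) (snd b))"
    unfolding eps_ext_def by (rule sum_hsupp_superset[OF _ cf_supp]) simp
  also have "\<dots> = (\<Sum>a\<in>{n..n + int m}. \<Sum>l\<le>m. cf q R S n m (a, l) * epsb a l)"
    by (simp add: sum.cartesian_product split_beta)
  also have "\<dots> = (\<Sum>a\<in>{n..n + int m}. \<Sum>l\<le>m. if l = 0 then cf q R S n m (a, l) else 0)"
    by (intro sum.cong refl) (simp add: epsb_def)
  also have "\<dots> = (\<Sum>a\<in>{n..n + int m}. cf q R S n m (a, 0))"
    by (simp add: sum.delta')
  also have "\<dots> = (\<Sum>a\<in>{n..n + int m}. qfact q m * (R n a * S a (n + int m)))"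
    by (intro sum.cong refl) (auto simp: cf_def)
  also have "\<dots> = qfact q m * mm R S n (n + int m)"
    by (simp add: mm_def sum_distrib_left)
  also have "\<dots> = epsb n m"
    using inv[of n "n + int m"] by (simp add: idm_def epsb_def)
  finally show ?thesis .
qed

lemma cf_high: 
  assumes "m < l" shows "cf q R S n m (a, l) = 0"
proof -
  have neg: "\<not> (n \<le> a \<and> a + int l \<le> n + int m)" using assms by linarith
  have "cf q R S n m (a,l) = (if n \<le> a \<and> a + int l \<le> n + int m then qfact q m / qfact q l * R n a * S (a + int l) (n + int m) else 0)"
    by (simp add: cf_def)
  also have "\<dots> = 0" by (rule if_not_P[OF neg])
  finally show ?thesis .
qed

lemma cf_top: "cf q R S n m (a, m) = (if a = n then R n n * S (n + int m) (n + int m) else 0)"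
  using qfact_nz3[of m] by (auto simp: cf_def)

end

lemma bprods_0[simp]: "bprods b n s 0 = 1"
  by (simp add: bprods_def)

lemma bprods_Suc: "bprods b n s (Suc j) = bprods b n s j * b (n + int j * int s)"
  by (simp add: bprods_def)

lemma bprods_Suc': "bprods b n s (Suc j) = b n * bprods b (n + int s) s j"
  unfolding bprods_def by (subst prod.lessThan_Suc_shift) (simp add: algebra_simps)

lemma bprods_div: "bprods (\<lambda>t. b t / (c::'k::field)) n s j = bprods b n s j / c ^ j"
  by (induction j) (simp_all add: bprods_Suc)

lemma sum_two_points:
  assumes "finite A" "p1 \<noteq> p2" "\<And>u. u \<in> A \<Longrightarrow> u \<noteq> p1 \<Longrightarrow> u \<noteq> p2 \<Longrightarrow> f u = 0"
  shows "sum f A = (if p1 \<in> A then f p1 else 0) + (if p2 \<in> A then f p2 else (0::'a::comm_monoid_add))"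
proof -
  have "sum f A = sum f (A \<inter> {p1, p2})"
    by (rule sum.mono_neutral_right) (use assms in auto)
  also have "\<dots> = (if p1 \<in> A then f p1 else 0) + (if p2 \<in> A then f p2 else 0)"
    using assms(2) by (cases "p1 \<in> A"; cases "p2 \<in> A") (auto simp: insert_commute Int_insert_right)
  finally show ?thesis .
qed

definition Rphi :: "'k::field \<Rightarrow> nat \<Rightarrow> (int \<Rightarrow> 'k) \<Rightarrow> int \<Rightarrow> int \<Rightarrow> 'k" where
  "Rphi q s b i k = (if i \<le> k \<and> int s dvd (k - i)
     then bprods (\<lambda>t. b t / qfact q s) i s (nat ((k - i) div int s)) else 0)"

definition Sphi :: "'k::field \<Rightarrow> nat \<Rightarrow> (int \<Rightarrow> 'k) \<Rightarrow> int \<Rightarrow> int \<Rightarrow> 'k" where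
  "Sphi q s b i k = (if k = i then 1 else if k = i + int s then - (b i / qfact q s) else 0)"

lemma Rphi_diag[simp]: "Rphi q s b i i = 1"
  by (simp add: Rphi_def)

lemma Sphi_diag[simp]: "Sphi q s b i i = 1"
  by (simp add: Sphi_def)

lemma Rphi_mult:
  assumes "s > 0"
  shows "Rphi q s b i (i + int s * int j) = bprods (\<lambda>t. b t / qfact q s) i s j"
  using assms by (simp add: Rphi_def)

lemma Rphi_ndvd:
  assumes "\<not> int s dvd (k - i)"
  shows "Rphi q s b i k = 0"
  using assms by (simp add: Rphi_def)

lemma Sphi_Rphi:
  assumes s: "s > 0" and ik: "i \<le> k"
  shows "mm (Sphi q s b) (Rphi q s b) i k = idm i k"
proof -
  let ?g = "\<lambda>t. b t / qfact q s"
  have "mm (Sphi q s b) (Rphi q s b) i k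
      = (if i \<in> {i..k} then Sphi q s b i i * Rphi q s b i k else 0)
      + (if i + int s \<in> {i..k} then Sphi q s b i (i + int s) * Rphi q s b (i + int s) k else 0)"
    unfolding mm_def by (rule sum_two_points) (use s in \<open>auto simp: Sphi_def\<close>)
  also have "\<dots> = Rphi q s b i k + (if i + int s \<le> k then - ?g i * Rphi q s b (i + int s) k else 0)"
    using s ik by (simp add: Sphi_def)
  also have "\<dots> = idm i k"
  proof (cases "k = i")
    case True then show ?thesis using s by (simp add: idm_def)
  next
    case False
    show ?thesis
    proof (cases "int s dvd (k - i)")
      case True
      then obtain j0 where j0: "k - i = int s * j0" by (auto elim: dvdE)
      have "0 \<le> int s * j0" using j0 ik by simp
      then have "j0 \<ge> 0" using s by (simp add: zero_le_mult_iff)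
      then obtain j where j: "k - i = int s * int j" using j0 by (metis nonneg_int_cases)
      have "j \<noteq> 0"
      proof
        assume "j = 0" then have "k - i = 0" using j by simp
        then show False using False by simp
      qed
      then obtain j' where j': "j = Suc j'" by (cases j) auto
      have k1: "k = i + int s * int (Suc j')" using j j' by simp
      have k2: "k = (i + int s) + int s * int j'" using k1 by (simp add: algebra_simps)
      have le: "i + int s \<le> k" using k2 by simp
      have "Rphi q s b i k = ?g i * bprods ?g (i + int s) s j'"
        unfolding k1 Rphi_mult[OF s] by (simp add: bprods_Suc')
      moreover have "Rphi q s b (i + int s) k = bprods ?g (i + int s) s j'"
        unfolding k2 Rphi_mult[OF s] ..
      ultimately show ?thesis using le False by (simp add: idm_def)
    next
      case ndvd: False
      have r1: "Rphi q s b i k = 0" by (rule Rphi_ndvd[OF ndvd])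
      have "\<not> int s dvd (k - (i + int s))"
      proof
        assume h: "int s dvd (k - (i + int s))"
        have "int s dvd (k - (i + int s)) + int s" using h by (rule dvd_add) simp
        moreover have "(k - (i + int s)) + int s = k - i" by simp
        ultimately show False using ndvd by simp
      qed
      then have r2: "Rphi q s b (i + int s) k = 0" by (rule Rphi_ndvd)
      show ?thesis using False by (simp add: r1 r2 idm_def)
    qed
  qed
  finally show ?thesis .
qed

lemma Rphi_Sphi:
  assumes s: "s > 0" and ik: "i \<le> k"
  shows "mm (Rphi q s b) (Sphi q s b) i k = idm i k"
proof -
  let ?g = "\<lambda>t. b t / qfact q s"
  have "mm (Rphi q s b) (Sphi q s b) i k
      = (if k \<in> {i..k} then Rphi q s b i k * Sphi q s b k k else 0)
      + (if k - int s \<in> {i..k} then Rphi q s b i (k - int s) * Sphi q s b (k - int s) k else 0)"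
    unfolding mm_def by (rule sum_two_points) (use s in \<open>auto simp: Sphi_def\<close>)
  also have "\<dots> = Rphi q s b i k + (if i \<le> k - int s then Rphi q s b i (k - int s) * (- ?g (k - int s)) else 0)"
    using s ik by (simp add: Sphi_def)
  also have "\<dots> = idm i k"
  proof (cases "k = i")
    case True then show ?thesis using s by (simp add: idm_def)
  next
    case False
    show ?thesis
    proof (cases "int s dvd (k - i)")
      case True
      then obtain j0 where j0: "k - i = int s * j0" by (auto elim: dvdE)
      have "0 \<le> int s * j0" using j0 ik by simp
      then have "j0 \<ge> 0" using s by (simp add: zero_le_mult_iff)
      then obtain j where j: "k - i = int s * int j" using j0 by (metis nonneg_int_cases)
      have "j \<noteq> 0"
      proof
        assume "j = 0" then have "k - i = 0" using j by simp
        then show False using False by simp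
      qed
      then obtain j' where j': "j = Suc j'" by (cases j) auto
      have k1: "k = i + int s * int (Suc j')" using j j' by simp
      have k2: "k - int s = i + int s * int j'" using k1 by (simp add: algebra_simps)
      have le: "i \<le> k - int s" using k2 by simp
      have "Rphi q s b i k = bprods ?g i s j' * ?g (i + int j' * int s)"
        unfolding k1 Rphi_mult[OF s] by (simp add: bprods_Suc)
      moreover have "Rphi q s b i (k - int s) = bprods ?g i s j'"
        unfolding k2 Rphi_mult[OF s] ..
      moreover have "k - int s = i + int j' * int s" using k2 by (simp add: algebra_simps)
      ultimately show ?thesis using le False by (simp add: idm_def)
    next
      case ndvd: False
      have r1: "Rphi q s b i k = 0" by (rule Rphi_ndvd[OF ndvd])
      have "\<not> int s dvd (k - int s - i)"
      proof
        assume h: "int s dvd (k - int s - i)"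
        have "int s dvd (k - int s - i) + int s" using h by (rule dvd_add) simp
        moreover have "(k - int s - i) + int s = k - i" by simp
        ultimately show False using ndvd by simp
      qed
      then have r2: "Rphi q s b i (k - int s) = 0" by (rule Rphi_ndvd)
      show ?thesis using False by (simp add: r1 r2 idm_def)
    qed
  qed
  finally show ?thesis .
qed

lemma bprods_1: "bprods b n 1 j = bprod b n j"
  by (simp add: bprods_def bprod_def)

definition NF :: "'k::field \<Rightarrow> nat \<Rightarrow> (int \<Rightarrow> 'k) \<Rightarrow> int \<Rightarrow> nat \<Rightarrow> 'k hvec" where
  "NF q s b n m = (\<lambda>c. (if snd c = m \<and> fst c = n then 1 else 0) +
     (if snd c < m \<and> s dvd (m - snd c) then
       (if fst c = n + int (m - snd c) then qfact q m / (qfact q (snd c) * qfact q s ^ ((m - snd c) div s))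
          * bprods b n s ((m - snd c) div s) else 0)
       - (if fst c = n + int (m - snd c) - int s then qfact q m / (qfact q (snd c) * qfact q s ^ ((m - snd c) div s))
          * bprods b n s ((m - snd c) div s - 1) * b (n + int m - int s) else 0)
     else 0))"

context
  fixes q :: "'k::field"
  assumes qnz: "q \<noteq> 0" and qroot: "\<forall>n::nat. n > 0 \<longrightarrow> q ^ n \<noteq> 1"
begin

lemmas qfact_nz'' = qfact_nz[OF qnz qroot]
lemmas qint_nz'' = qint_nz[OF qnz qroot]
lemmas qfact_Suc'' = qfact_Suc[OF qnz qroot]

lemma qfall_eq: "j \<le> m \<Longrightarrow> qfall q m j = qfact q m / qfact q (m - j)"
proof (induction j)
  case 0 then show ?case using qfact_nz''[of m] by (simp add: qfall_def)
next
  case (Suc j)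
  have "m - j = Suc (m - Suc j)" using Suc.prems by simp
  then have f: "qfact q (m - j) = qfact q (m - Suc j) * qint q (m - j)"
    by (simp add: qfact_Suc'')
  have nz: "qfact q (m - Suc j) \<noteq> 0" "qint q (m - j) \<noteq> 0" using Suc.prems
    by (simp_all add: qfact_nz'' qint_nz'')
  have "qfall q m (Suc j) = qfall q m j * qint q (m - j)" by (simp add: qfall_def)
  also have "\<dots> = qfact q m / qfact q (m - j) * qint q (m - j)" using Suc by simp
  also have "\<dots> = qfact q m / qfact q (m - Suc j)" using nz by (simp add: f)
  finally show ?case .
qed

lemma qbinom_iter_eq: "i * s \<le> m \<Longrightarrow> qbinom_iter q m s i = qfact q m / (qfact q s ^ i * qfact q (m - i * s))"
proof (induction i)
  case 0 then show ?case using qfact_nz''[of m] by (simp add: qbinom_iter_def)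
next
  case (Suc i)
  have le: "i * s \<le> m" using Suc.prems by simp
  have e: "m - i * s - s = m - Suc i * s" by simp
  have e2: "m - (i * s + s) = m - Suc i * s" by simp
  have nz: "qfact q s \<noteq> 0" "qfact q (m - i * s) \<noteq> 0" "qfact q (m - Suc i * s) \<noteq> 0"
    by (simp_all add: qfact_nz'')
  have "qbinom_iter q m s (Suc i) = qbinom_iter q m s i * qbinom q (m - i * s) s"
    by (simp add: qbinom_iter_def)
  also have "\<dots> = qfact q m / (qfact q s ^ i * qfact q (m - i * s)) * (qfact q (m - i * s) / (qfact q s * qfact q (m - Suc i * s)))"
    using Suc.IH[OF le] by (simp add: qbinom_def e e2 del: mult_Suc)
  also have "\<dots> = qfact q m / (qfact q s ^ Suc i * qfact q (m - Suc i * s))"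
    using nz by (simp add: field_simps)
  finally show ?case .
qed

lemma cf_NF:
  assumes s: "s > 0"
  shows "cf q (Rphi q s b) (Sphi q s b) n m = NF q s b n m"
proof (rule ext)
  fix c
  obtain a :: int and l :: nat where c: "c = (a, l)" by (cases c)
  let ?g = "\<lambda>t. b t / qfact q s"
  define K where "K = (\<lambda>i. qfact q m / (qfact q l * qfact q s ^ i))"
  have cfv: "cf q (Rphi q s b) (Sphi q s b) n m c = (if n \<le> a \<and> a + int l \<le> n + int m then
      qfact q m / qfact q l * Rphi q s b n a * Sphi q s b (a + int l) (n + int m) else 0)"
    by (simp add: cf_def c)
  have nfv: "NF q s b n m c = (if l = m \<and> a = n then 1 else 0) +
     (if l < m \<and> s dvd (m - l) then
       (if a = n + int (m - l) then K ((m - l) div s) * bprods b n s ((m - l) div s) else 0)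
       - (if a = n + int (m - l) - int s then K ((m - l) div s) * bprods b n s ((m - l) div s - 1) * b (n + int m - int s) else 0)
     else 0)"
    by (simp add: NF_def c K_def)
  have nzl: "qfact q l \<noteq> 0" and nzs: "qfact q s \<noteq> 0" by (simp_all add: qfact_nz'')
  show "cf q (Rphi q s b) (Sphi q s b) n m c = NF q s b n m c"
  proof (cases "n \<le> a \<and> a + int l = n + int m")
    case C1: True
    show ?thesis
    proof (cases "l = m")
      case True
      then have "a = n" using C1 by simp
      then show ?thesis unfolding cfv nfv using True qfact_nz''[of m] by simp
    next
      case False
      then have lm: "l < m" using C1 by linarith
      have a: "a = n + int (m - l)" using C1 lm by simp
      show ?thesis
      proof (cases "s dvd (m - l)")
        case True
        then obtain i where mi: "m - l = s * i" by (auto elim: dvdE)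
        have di: "(m - l) div s = i" using mi s by simp
        have an: "a = n + int s * int i" using a mi by simp
        have R: "Rphi q s b n a = bprods b n s i / qfact q s ^ i"
          unfolding an Rphi_mult[OF s] bprods_div ..
        have S: "Sphi q s b (a + int l) (n + int m) = 1" using C1 by (simp add: Sphi_def)
        have n2: "a \<noteq> n + int (m - l) - int s" using a s by simp
        have "cf q (Rphi q s b) (Sphi q s b) n m c = qfact q m / qfact q l * (bprods b n s i / qfact q s ^ i)"
          unfolding cfv using C1 R S by simp
        also have "\<dots> = K i * bprods b n s i" by (simp add: K_def)
        also have "\<dots> = NF q s b n m c" unfolding nfv di using lm True a n2 by simp
        finally show ?thesis .
      next
        case ndvd: False
        have "\<not> int s dvd (a - n)" using a ndvd by (simp add: int_dvd_int_iff)
        then have R: "Rphi q s b n a = 0" by (rule Rphi_ndvd)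
        show ?thesis unfolding cfv nfv using R ndvd False by simp
      qed
    qed
  next
    case notC1: False
    show ?thesis
    proof (cases "n \<le> a \<and> a + int l + int s = n + int m")
      case C2: True
      have lm: "l + s \<le> m" using C2 by linarith
      then have lm': "l < m" using s by simp
      have a: "a = n + int (m - l) - int s" using C2 lm by simp
      have S: "Sphi q s b (a + int l) (n + int m) = - ?g (a + int l)"
        using C2 s by (simp add: Sphi_def)
      have al: "a + int l = n + int m - int s" using C2 by simp
      show ?thesis
      proof (cases "s dvd (m - l)")
        case True
        then obtain i where mi: "m - l = s * i" by (auto elim: dvdE)
        have "i \<noteq> 0"
        proof
          assume "i = 0" then have "m - l = 0" using mi by simp
          then show False using lm s by simp
        qed
        then obtain i' where i': "i = Suc i'" by (cases i) auto
        have di: "(m - l) div s = Suc i'" using mi s i' by simp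
        have an: "a = n + int s * int i'" using a mi i' by (simp add: algebra_simps)
        have R: "Rphi q s b n a = bprods b n s i' / qfact q s ^ i'"
          unfolding an Rphi_mult[OF s] bprods_div ..
        have n1: "a \<noteq> n + int (m - l)" using a s by simp
        have "cf q (Rphi q s b) (Sphi q s b) n m c
            = qfact q m / qfact q l * (bprods b n s i' / qfact q s ^ i') * (- (b (n + int m - int s) / qfact q s))"
          unfolding cfv using C2 R S al by simp
        also have "\<dots> = - (K (Suc i') * bprods b n s i' * b (n + int m - int s))"
          using nzl nzs by (simp add: K_def field_simps)
        also have "\<dots> = NF q s b n m c" unfolding nfv di using lm' True a n1 by simp
        finally show ?thesis .
      next
        case ndvd: False
        have "\<not> int s dvd (a - n)"
        proof
          assume h: "int s dvd (a - n)"
          have "int s dvd (a - n) + int s" using h by (rule dvd_add) simp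
          moreover have "(a - n) + int s = int (m - l)" using a by simp
          ultimately show False using ndvd by (simp add: int_dvd_int_iff)
        qed
        then have R: "Rphi q s b n a = 0" by (rule Rphi_ndvd)
        show ?thesis unfolding cfv nfv using R ndvd lm' by simp
      qed
    next
      case notC2: False
      have cf0: "cf q (Rphi q s b) (Sphi q s b) n m c = 0"
      proof (cases "n \<le> a \<and> a + int l \<le> n + int m")
        case True
        have "Sphi q s b (a + int l) (n + int m) = 0"
          using notC1 notC2 True by (auto simp: Sphi_def)
        then show ?thesis unfolding cfv by simp
      next
        case False then show ?thesis unfolding cfv by (rule if_not_P)
      qed
      have t1: "\<not> (l = m \<and> a = n)" using notC1 by auto
      have t2: "(if l < m \<and> s dvd (m - l) then
       (if a = n + int (m - l) then K ((m - l) div s) * bprods b n s ((m - l) div s) else 0)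
       - (if a = n + int (m - l) - int s then K ((m - l) div s) * bprods b n s ((m - l) div s - 1) * b (n + int m - int s) else 0)
     else 0) = 0"
      proof (cases "l < m \<and> s dvd (m - l)")
        case True
        then obtain i where mi: "m - l = s * i" by (auto elim: dvdE)
        have "i \<noteq> 0"
        proof
          assume "i = 0" then have "m - l = 0" using mi by simp
          then show False using True by simp
        qed
        then have ge: "s \<le> m - l" using mi by simp
        have a1: "a \<noteq> n + int (m - l)" using notC1 True by auto
        have a2: "a \<noteq> n + int (m - l) - int s" using notC2 True ge by auto
        show ?thesis unfolding if_P[OF True] if_not_P[OF a1] if_not_P[OF a2] by simp
      next
        case False then show ?thesis by (rule if_not_P)
      qed
      show ?thesis unfolding nfv cf0 t2 using t1 by simp
    qed
  qed
qed

lemma phis_NF: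
  assumes s: "s > 1"
  shows "phis q s b n m = NF q s b n m"
proof (rule ext)
  fix c
  obtain a :: int and l :: nat where c: "c = (a, l)" by (cases c)
  define D where "D = (l < m \<and> s dvd (m - l))"
  define i0 where "i0 = (m - l) div s"
  define K where "K = (\<lambda>i. qfact q m / (qfact q l * qfact q s ^ i))"
  have nfv: "NF q s b n m c = (if l = m \<and> a = n then 1 else 0) +
     (if D then
       (if a = n + int (m - l) then K i0 * bprods b n s i0 else 0)
       - (if a = n + int (m - l) - int s then K i0 * bprods b n s (i0 - 1) * b (n + int m - int s) else 0)
     else 0)"
    by (simp add: NF_def c K_def D_def i0_def)
  have basv: "bas n m c = (if l = m \<and> a = n then 1 else 0)" by (auto simp: bas_def c)
  show "phis q s b n m c = NF q s b n m c"
  proof (cases "m < s")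
    case True
    have "\<not> D"
    proof
      assume hD: D
      then have "s \<le> m - l" unfolding D_def by (auto intro: dvd_imp_le)
      then show False using True by simp
    qed
    then show ?thesis using True by (simp add: phis_def nfv basv)
  next
    case False
    let ?G = "qbinom_iter q m s i0 * ((if a = n + int (m - l) then bprods b n s i0 else 0)
        - (if a = n + int (m - l) - int s then bprods b n s (i0 - 1) * b (n + int m - int s) else 0))"
    have "phis q s b n m c = bas n m c + (\<Sum>i\<in>{1..m div s}. qbinom_iter q m s i *
        (bprods b n s i * bas (n + int (i * s)) (m - i * s) c
         - bprods b n s (i - 1) * b (n + int m - int s) * bas (n + int (i * s) - int s) (m - i * s) c))"
      using False by (simp add: phis_def sum_apply_fun)
    also have "\<dots> = bas n m c + (\<Sum>i\<in>{1..m div s}. if i = i0 \<and> D then ?G else 0)"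
    proof (intro arg_cong2[where f="(+)"] refl sum.cong)
      fix i assume i: "i \<in> {1..m div s}"
      have ism: "i * s \<le> m" using i by (meson atLeastAtMost_iff div_times_less_eq_dividend le_trans mult_le_mono1)
      show "qbinom_iter q m s i *
        (bprods b n s i * bas (n + int (i * s)) (m - i * s) c
         - bprods b n s (i - 1) * b (n + int m - int s) * bas (n + int (i * s) - int s) (m - i * s) c)
        = (if i = i0 \<and> D then ?G else 0)"
      proof (cases "l = m - i * s")
        case True
        have mli: "m - l = i * s" using True ism by simp
        have pos: "0 < i * s" using i s by auto
        have m0: "0 < m" using pos ism by linarith
        have "l < m" unfolding True by (rule diff_less[OF pos m0])
        then have D: D unfolding D_def using mli by simp
        have ii: "i = i0" unfolding i0_def mli using s by simp
        show ?thesis using D ii[symmetric] mli by (simp add: bas_def c True)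
      next
        case False
        have nb: "\<not> (i = i0 \<and> D)"
        proof
          assume h: "i = i0 \<and> D"
          then have "s dvd (m - l)" "l < m" by (simp_all add: D_def)
          then have e: "m - l = i0 * s" by (simp add: i0_def)
          have "l = m - i0 * s" using e \<open>l < m\<close> by (metis diff_diff_cancel less_imp_le)
          then show False using False h by simp
        qed
        show ?thesis using False nb by (auto simp: bas_def c)
      qed
    qed
    also have "\<dots> = bas n m c + (if i0 \<in> {1..m div s} \<and> D then ?G else 0)"
      by (simp only: sum_if_single finite_atLeastAtMost)
    also have "\<dots> = NF q s b n m c"
    proof (cases D)
      case True
      then have dv: "s dvd (m - l)" and lm: "l < m" by (simp_all add: D_def)
      have mi: "m - l = i0 * s" using dv by (simp add: i0_def)
      have "i0 \<noteq> 0" using mi lm by (metis mult_eq_0_iff zero_less_diff less_irrefl)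
      moreover have "i0 \<le> m div s" unfolding i0_def by (simp add: div_le_mono)
      ultimately have i0in: "i0 \<in> {1..m div s}" by simp
      have le: "i0 * s \<le> m" using mi lm by linarith
      have ml: "m - i0 * s = l" using mi lm by (metis diff_diff_cancel less_imp_le)
      have qi: "qbinom_iter q m s i0 = K i0"
        using qbinom_iter_eq[OF le] ml by (simp add: K_def mult.commute)
      show ?thesis unfolding nfv basv using True i0in by (simp add: qi right_diff_distrib mult.assoc)
    next
      case False
      then show ?thesis unfolding nfv basv by simp
    qed
    finally show ?thesis .
  qed
qed

lemma phi1_NF: "phi1 q b n m = NF q 1 b n m"
proof (rule ext)
  fix c
  obtain a :: int and l :: nat where c: "c = (a, l)" by (cases c)
  let ?G = "qfall q m (m - l) * ((if a = n + int m - int l then bprod b n (m - l) else 0)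
        - (if a = n + int m - int l - 1 then bprod b n (m - l - 1) * b (n + int m - 1) else 0))"
  have basv: "bas n m c = (if l = m \<and> a = n then 1 else 0)" by (auto simp: bas_def c)
  have "phi1 q b n m c = bas n m c + (\<Sum>l'<m. qfall q m (m - l') *
        (bprod b n (m - l') * bas (n + int m - int l') l' c
         - bprod b n (m - l' - 1) * b (n + int m - 1) * bas (n + int m - int l' - 1) l' c))"
    by (simp add: phi1_def sum_apply_fun)
  also have "\<dots> = bas n m c + (\<Sum>l'<m. if l' = l then ?G else 0)"
    by (intro arg_cong2[where f="(+)"] refl sum.cong) (auto simp: bas_def c)
  also have "\<dots> = bas n m c + (if l < m then ?G else 0)"
    by (simp add: sum.delta')
  also have "\<dots> = NF q 1 b n m c"
  proof (cases "l < m")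
    case True
    have qf: "qfall q m (m - l) = qfact q m / qfact q l" using qfall_eq[of "m - l" m] True by simp
    have e1: "n + int (m - l) = n + int m - int l" using True by simp
    have e2: "m - l - 1 = m - Suc l" by simp
    have b0: "bas n m c = 0" using True by (simp add: bas_def c)
    have q1: "qfact q (Suc 0) = 1" by (simp add: qfact_def qint_def)
    have nfv: "NF q 1 b n m c = (if a = n + int (m - l) then qfact q m / qfact q l * bprod b n (m - l) else 0)
       - (if a = n + int (m - l) - 1 then qfact q m / qfact q l * bprod b n (m - l - 1) * b (n + int m - 1) else 0)"
      using True by (simp add: NF_def c q1 bprods_1[unfolded One_nat_def])
    show ?thesis unfolding nfv b0 qf e1 using True by (simp add: right_diff_distrib mult.assoc)
  next
    case False
    then show ?thesis by (simp add: NF_def c bas_def)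
  qed
  finally show "phi1 q b n m c = NF q 1 b n m c" .
qed

end

primrec Rch :: "'k::field \<Rightarrow> (nat \<Rightarrow> int \<Rightarrow> 'k) \<Rightarrow> nat \<Rightarrow> int \<Rightarrow> int \<Rightarrow> 'k" where
  "Rch q \<beta> 0 = idm"
| "Rch q \<beta> (Suc j) = mm (Rphi q (Suc j) (\<beta> (Suc j))) (Rch q \<beta> j)"

primrec Sch :: "'k::field \<Rightarrow> (nat \<Rightarrow> int \<Rightarrow> 'k) \<Rightarrow> nat \<Rightarrow> int \<Rightarrow> int \<Rightarrow> 'k" where
  "Sch q \<beta> 0 = idm"
| "Sch q \<beta> (Suc j) = mm (Sch q \<beta> j) (Sphi q (Suc j) (\<beta> (Suc j)))"

lemma chain_SR: "i \<le> k \<Longrightarrow> mm (Sch q \<beta> j) (Rch q \<beta> j) i k = idm i k"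
proof (induction j arbitrary: i k)
  case 0 then show ?case by (simp add: mm_idm_left)
next
  case (Suc j)
  show ?case unfolding Sch.simps Rch.simps
    by (rule inv_comp[OF Sphi_Rphi Suc.IH Suc.prems]) simp_all
qed

lemma chain_RS: "i \<le> k \<Longrightarrow> mm (Rch q \<beta> j) (Sch q \<beta> j) i k = idm i k"
proof (induction j arbitrary: i k)
  case 0 then show ?case by (simp add: mm_idm_left)
next
  case (Suc j)
  show ?case unfolding Sch.simps Rch.simps
    by (rule inv_comp[OF Suc.IH Rphi_Sphi Suc.prems]) simp_all
qed

lemma chain_diag: "Rch q \<beta> j i i = 1" "Sch q \<beta> j i i = 1"
  by (induction j) (simp_all add: mm_diag idm_def)

lemma Rch_dep: "(\<And>i. 1 \<le> i \<Longrightarrow> i \<le> j \<Longrightarrow> \<beta> i = \<beta>' i) \<Longrightarrow> Rch q \<beta> j = Rch q \<beta>' j"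
  by (induction j) auto

context
  fixes q :: "'k::field"
  assumes qnz: "q \<noteq> 0" and qroot: "\<forall>n::nat. n > 0 \<longrightarrow> q ^ n \<noteq> 1"
begin

lemma phi_cf: "s > 0 \<Longrightarrow> phi q s b = cf q (Rphi q s b) (Sphi q s b)"
proof -
  assume s: "s > 0"
  show ?thesis
  proof (cases "s = 1")
    case True
    then show ?thesis
      using phi1_NF[OF qnz qroot, of b] cf_NF[OF qnz qroot s, of b] by (auto simp: phi_def fun_eq_iff)
  next
    case False
    then have "s > 1" using s by simp
    then show ?thesis
      using phis_NF[OF qnz qroot, of s b] cf_NF[OF qnz qroot s, of b] False by (auto simp: phi_def fun_eq_iff)
  qed
qed

lemma phi_low: "m < s \<Longrightarrow> phi q s b n m = bas n m"
  by (auto simp: phi_def phi1_def phis_def)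

lemma PhiChain_cf: "v \<in> Hsp \<Longrightarrow> PhiChain q \<beta> j v = ext (cf q (Rch q \<beta> j) (Sch q \<beta> j)) v"
proof (induction j arbitrary: v)
  case 0
  have "cf q idm idm = (bas :: int \<Rightarrow> nat \<Rightarrow> 'k hvec)"
    by (auto simp: cf_idm[OF qnz qroot] fun_eq_iff)
  then show ?case using 0 by (simp add: ext_bas_id)
next
  case (Suc j)
  let ?P = "phi q (Suc j) (\<beta> (Suc j))"
  have pc: "?P = cf q (Rphi q (Suc j) (\<beta> (Suc j))) (Sphi q (Suc j) (\<beta> (Suc j)))"
    by (rule phi_cf) simp
  have h: "ext ?P v \<in> Hsp" unfolding pc by (rule ext_Hsp[OF Suc.prems cf_Hsp])
  have "PhiChain q \<beta> (Suc j) v = ext (cf q (Rch q \<beta> j) (Sch q \<beta> j)) (ext ?P v)"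
    using Suc.IH[OF h] by simp
  also have "\<dots> = ext (\<lambda>n m. ext (cf q (Rch q \<beta> j) (Sch q \<beta> j)) (?P n m)) v"
    unfolding pc by (rule ext_comp[OF Suc.prems cf_Hsp])
  also have "\<dots> = ext (cf q (Rch q \<beta> (Suc j)) (Sch q \<beta> (Suc j))) v"
    unfolding pc by (simp add: cf_comp[OF qnz qroot])
  finally show ?case .
qed

lemma PhiChain_bas: "PhiChain q \<beta> j (bas n m) = cf q (Rch q \<beta> j) (Sch q \<beta> j) n m"
  by (simp add: PhiChain_cf)

lemma PhiChain_stable: "m \<le> M \<Longrightarrow> PhiChain q \<beta> M (bas n m) = PhiChain q \<beta> m (bas n m)"
proof (induction M rule: dec_induct)
  case base then show ?case by simp
next
  case (step M)
  have "PhiChain q \<beta> (Suc M) (bas n m) = PhiChain q \<beta> M (phi q (Suc M) (\<beta> (Suc M)) n m)" by simp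
  also have "\<dots> = PhiChain q \<beta> M (bas n m)" using step by (simp add: phi_low)
  finally show ?case using step by simp
qed

lemma PhiMap_chain: "PhiMap q \<beta> n m = PhiChain q \<beta> m (bas n m)"
  by (simp add: PhiMap_def)

lemma PhiMap_cf: "PhiMap q \<beta> n m = cf q (Rch q \<beta> m) (Sch q \<beta> m) n m"
  by (simp add: PhiMap_chain PhiChain_bas)

lemma PhiMap_cf_le: "i \<le> m \<Longrightarrow> PhiMap q \<beta> n i = cf q (Rch q \<beta> m) (Sch q \<beta> m) n i"
proof -
  assume im: "i \<le> m"
  have "PhiMap q \<beta> n i = PhiChain q \<beta> m (bas n i)"
    using PhiChain_stable[OF im, of \<beta> n] by (simp add: PhiMap_chain)
  then show ?thesis by (simp only: PhiChain_bas)
qed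

lemma PhiMap_Hsp: "PhiMap q \<beta> n m \<in> Hsp"
  by (simp add: PhiMap_cf cf_Hsp)

lemma PhiMap_coalg: "Delta_ext q (PhiMap q \<beta> n m) = tmap (PhiMap q \<beta>) (Delta q n m)"
proof -
  have "Delta_ext q (PhiMap q \<beta> n m) = tmap (cf q (Rch q \<beta> m) (Sch q \<beta> m)) (Delta q n m)"
    unfolding PhiMap_cf by (rule cf_coalg[OF qnz qroot chain_SR])
  also have "\<dots> = tmap (PhiMap q \<beta>) (Delta q n m)"
  proof (rule ext)
    fix c
    show "tmap (cf q (Rch q \<beta> m) (Sch q \<beta> m)) (Delta q n m) c = tmap (PhiMap q \<beta>) (Delta q n m) c"
      unfolding tmap_Delta_pt[OF qnz qroot]
      by (intro sum.cong refl) (simp add: PhiMap_cf_le[of _ m])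
  qed
  finally show ?thesis .
qed

lemma PhiMap_eps: "eps_ext (PhiMap q \<beta> n m) = epsb n m"
  unfolding PhiMap_cf by (rule cf_eps[OF qnz qroot chain_RS])

lemma PhiMap_high: "m < l \<Longrightarrow> PhiMap q \<beta> n m (a, l) = 0"
  unfolding PhiMap_cf by (rule cf_high[OF qnz qroot])

lemma PhiMap_top: "PhiMap q \<beta> n m (a, m) = (if a = n then 1 else 0)"
  unfolding PhiMap_cf by (simp add: cf_top[OF qnz qroot] chain_diag)

lemma PhiMap_0: "PhiMap q \<beta> n 0 = bas n 0"
  by (simp add: PhiMap_def)

lemma PhiMap_1: "PhiMap q \<beta> n 1 = bas n 1 + smult (\<beta> 1 n) (bas (n + 1) 0 - bas n 0)"
  by (rule ext) (simp add: PhiMap_def phi_def phi1_def qfall_def bprod_def qint_def right_diff_distrib)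

end

lemma ext_top:
  fixes \<phi> :: "int \<Rightarrow> nat \<Rightarrow> ('k::comm_ring_1) hvec"
  assumes w: "w \<in> Hsp" and deg: "\<And>b. b \<in> hsupp w \<Longrightarrow> snd b \<le> d"
    and high: "\<And>n m a l. m < l \<Longrightarrow> \<phi> n m (a, l) = 0"
    and top: "\<And>n m a. \<phi> n m (a, m) = (if a = n then 1 else 0)"
  shows "ext \<phi> w (a, d) = w (a, d)"
proof -
  have "ext \<phi> w (a, d) = (\<Sum>b\<in>hsupp w. w b * \<phi> (fst b) (snd b) (a, d))" by (simp add: ext_def)
  also have "\<dots> = (\<Sum>b\<in>hsupp w. if b = (a, d) then w b else 0)"
  proof (intro sum.cong refl)
    fix b assume b: "b \<in> hsupp w"
    show "w b * \<phi> (fst b) (snd b) (a, d) = (if b = (a, d) then w b else 0)"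
    proof (cases "snd b < d")
      case True then show ?thesis using high[OF True] by auto
    next
      case False
      then have "snd b = d" using deg[OF b] by simp
      then show ?thesis using top[of "fst b" d a] by (cases b) auto
    qed
  qed
  also have "\<dots> = w (a, d)" using w by (auto simp: Hsp_def hsupp_def sum.delta')
  finally show ?thesis .
qed

lemma ext_above:
  fixes \<phi> :: "int \<Rightarrow> nat \<Rightarrow> ('k::comm_ring_1) hvec"
  assumes deg: "\<And>b. b \<in> hsupp w \<Longrightarrow> snd b \<le> d" and dl: "d < l"
    and high: "\<And>n m a l. m < l \<Longrightarrow> \<phi> n m (a, l) = 0"
  shows "ext \<phi> w (a, l) = 0"
proof -
  have "ext \<phi> w (a, l) = (\<Sum>b\<in>hsupp w. w b * \<phi> (fst b) (snd b) (a, l))" by (simp add: ext_def)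
  also have "\<dots> = 0"
  proof (rule sum.neutral, intro ballI)
    fix b assume "b \<in> hsupp w"
    then have "snd b \<le> d" by (rule deg)
    then have "snd b < l" using dl by simp
    then show "w b * \<phi> (fst b) (snd b) (a, l) = 0" using high by simp
  qed
  finally show ?thesis .
qed

lemma Hsp_bounded:
  assumes "w \<in> Hsp" obtains d where "\<And>b. b \<in> hsupp w \<Longrightarrow> snd b < d"
proof -
  have "finite (snd ` hsupp w)" using assms by (simp add: Hsp_def)
  then obtain d where "\<forall>x\<in>snd ` hsupp w. x < d" using finite_nat_set_iff_bounded by blast
  then show ?thesis using that by blast
qed

lemma unitri_bij:
  fixes \<phi> :: "int \<Rightarrow> nat \<Rightarrow> ('k::comm_ring_1) hvec"
  assumes Hs: "\<And>n m. \<phi> n m \<in> Hsp"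
    and high: "\<And>n m a l. m < l \<Longrightarrow> \<phi> n m (a, l) = 0"
    and top: "\<And>n m a. \<phi> n m (a, m) = (if a = n then 1 else 0)"
  shows "bij_betw (ext \<phi>) Hsp Hsp"
proof -
  have zero: "\<And>d. \<forall>w\<in>Hsp. (\<forall>b\<in>hsupp w. snd b < d) \<longrightarrow> ext \<phi> w = 0 \<longrightarrow> w = 0"
  proof -
    fix d show "\<forall>w\<in>Hsp. (\<forall>b\<in>hsupp w. snd b < d) \<longrightarrow> ext \<phi> w = 0 \<longrightarrow> w = 0"
    proof (induction d)
      case 0 then show ?case by (auto simp: hsupp_def)
    next
      case (Suc d)
      show ?case
      proof (intro ballI impI)
        fix w assume w: "w \<in> Hsp" and bd: "\<forall>b\<in>hsupp w. snd b < Suc d" and e: "ext \<phi> w = 0"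
        have wd: "\<And>a. w (a, d) = 0"
        proof -
          fix a
          have "w (a, d) = ext \<phi> w (a, d)"
            by (rule ext_top[symmetric, OF w _ high top]) (use bd in force)
          then show "w (a, d) = 0" using e by simp
        qed
        have "\<forall>b\<in>hsupp w. snd b < d"
        proof
          fix b assume b: "b \<in> hsupp w"
          then have "snd b \<noteq> d" using wd by (cases b) (auto simp: hsupp_def)
          then show "snd b < d" using bd b by force
        qed
        then show "w = 0" using Suc.IH w e by blast
      qed
    qed
  qed
  have inj: "inj_on (ext \<phi>) Hsp"
  proof (rule inj_onI)
    fix u v assume u: "u \<in> Hsp" and v: "v \<in> Hsp" and e: "ext \<phi> u = ext \<phi> v"
    have w: "u - v \<in> Hsp" using u v by simp
    have e0: "ext \<phi> (u - v) = 0" using e by (simp add: ext_diff[OF u v])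
    obtain d where "\<And>b. b \<in> hsupp (u - v) \<Longrightarrow> snd b < d" using Hsp_bounded[OF w] by blast
    then have "u - v = 0" using zero[of d] w e0 by blast
    then show "u = v" by simp
  qed
  have surj: "\<And>d. \<forall>w\<in>Hsp. (\<forall>b\<in>hsupp w. snd b < d) \<longrightarrow> w \<in> ext \<phi> ` Hsp"
  proof -
    fix d show "\<forall>w\<in>Hsp. (\<forall>b\<in>hsupp w. snd b < d) \<longrightarrow> w \<in> ext \<phi> ` Hsp"
    proof (induction d)
      case 0
      show ?case
      proof (intro ballI impI)
        fix w :: "'k hvec" assume "w \<in> Hsp" "\<forall>b\<in>hsupp w. snd b < 0"
        then have "w = 0" by (auto simp: hsupp_def)
        moreover have "ext \<phi> 0 = 0" by (simp add: ext_def hsupp_def fun_eq_iff)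
        moreover have "(0 :: 'k hvec) \<in> Hsp" by (simp add: Hsp_def hsupp_def)
        ultimately show "w \<in> ext \<phi> ` Hsp" by (metis image_eqI)
      qed
    next
      case (Suc d)
      show ?case
      proof (intro ballI impI)
        fix w :: "'k hvec" assume w: "w \<in> Hsp" and bd: "\<forall>b\<in>hsupp w. snd b < Suc d"
        define t where "t = (\<lambda>c. if snd c = d then w c else 0)"
        have ts: "hsupp t \<subseteq> hsupp w" by (auto simp: t_def hsupp_def)
        have t: "t \<in> Hsp" using w ts by (auto simp: Hsp_def intro: finite_subset)
        have tdeg: "\<And>b. b \<in> hsupp t \<Longrightarrow> snd b \<le> d" by (auto simp: t_def hsupp_def split: if_splits)
        have et: "ext \<phi> t \<in> Hsp" by (rule ext_Hsp[OF t Hs])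
        define w' where "w' = w - ext \<phi> t"
        have w'H: "w' \<in> Hsp" using w et by (simp add: w'_def)
        have w'd: "\<forall>b\<in>hsupp w'. snd b < d"
        proof
          fix b assume b: "b \<in> hsupp w'"
          obtain a l where bb: "b = (a, l)" by (cases b)
          show "snd b < d"
          proof (rule ccontr)
            assume "\<not> snd b < d"
            then have ld: "d \<le> l" using bb by simp
            have "w' (a, l) = 0"
            proof (cases "l = d")
              case True
              have "ext \<phi> t (a, d) = t (a, d)" by (rule ext_top[OF t tdeg high top])
              then show ?thesis using True by (simp add: w'_def t_def)
            next
              case False
              then have dl: "d < l" using ld by simp
              have "w (a, l) = 0" using bd dl by (force simp: hsupp_def)
              moreover have "ext \<phi> t (a, l) = 0" by (rule ext_above[where \<phi>=\<phi>, OF tdeg dl high])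
              ultimately show ?thesis by (simp add: w'_def)
            qed
            then show False using b bb by (simp add: hsupp_def)
          qed
        qed
        then obtain v' where v': "v' \<in> Hsp" "w' = ext \<phi> v'" using Suc.IH w'H by blast
        have "ext \<phi> (v' + t) = ext \<phi> v' + ext \<phi> t" by (rule ext_add[OF v'(1) t])
        also have "\<dots> = w" using v'(2) unfolding w'_def by (metis diff_add_cancel)
        finally have "ext \<phi> (v' + t) = w" .
        moreover have "v' + t \<in> Hsp" using v' t by simp
        ultimately show "w \<in> ext \<phi> ` Hsp" by (metis image_eqI)
      qed
    qed
  qed
  have "ext \<phi> ` Hsp = Hsp"
  proof
    show "ext \<phi> ` Hsp \<subseteq> Hsp"
    proof (rule image_subsetI)
      fix v :: "'k hvec" assume "v \<in> Hsp" then show "ext \<phi> v \<in> Hsp" by (rule ext_Hsp[OF _ Hs])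
    qed
    show "Hsp \<subseteq> ext \<phi> ` Hsp"
    proof
      fix w :: "'k hvec" assume w: "w \<in> Hsp"
      obtain d where "\<And>b. b \<in> hsupp w \<Longrightarrow> snd b < d" using Hsp_bounded[OF w] by blast
      then have "\<forall>b\<in>hsupp w. snd b < d" by blast
      then show "w \<in> ext \<phi> ` Hsp" using surj[of d] w by blast
    qed
  qed
  then show ?thesis using inj by (simp add: bij_betw_def)
qed


primrec Bseq :: "'k::field \<Rightarrow> (int \<Rightarrow> nat \<Rightarrow> 'k hvec) \<Rightarrow> nat \<Rightarrow> nat \<Rightarrow> int \<Rightarrow> 'k" where
  "Bseq q \<psi> 0 = (\<lambda>_ _. 0)"
| "Bseq q \<psi> (Suc m) = (Bseq q \<psi> m)(Suc m := (\<lambda>n. \<psi> n (Suc m) (n + int (Suc m), 0)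
      - qfact q (Suc m) * Rch q (Bseq q \<psi> m) m n (n + int (Suc m))))"

lemma Bseq_0: "Bseq q \<psi> m 0 = (\<lambda>_. 0)"
  by (induction m) auto

lemma Bseq_stable: "i \<le> m \<Longrightarrow> 1 \<le> i \<Longrightarrow> Bseq q \<psi> m i = Bseq q \<psi> i i"
proof (induction m)
  case 0 then show ?case by simp
next
  case (Suc m)
  show ?case
  proof (cases "i = Suc m")
    case True then show ?thesis by simp
  next
    case False then show ?thesis using Suc by simp
  qed
qed

context
  fixes q :: "'k::field"
  assumes qnz: "q \<noteq> 0" and qroot: "\<forall>n::nat. n > 0 \<longrightarrow> q ^ n \<noteq> 1"
begin

lemma PhiMap_in: "PhiMap q \<beta> \<in> Aut_star q"
proof -
  have bij: "bij_betw (ext (PhiMap q \<beta>)) Hsp Hsp"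
    by (rule unitri_bij) (simp_all add: PhiMap_Hsp[OF qnz qroot] PhiMap_high[OF qnz qroot] PhiMap_top[OF qnz qroot])
  show ?thesis unfolding Aut_star_def is_coalg_aut_def
    using bij PhiMap_Hsp[OF qnz qroot] PhiMap_coalg[OF qnz qroot] PhiMap_eps[OF qnz qroot]
      PhiMap_0[OF qnz qroot] PhiMap_1[OF qnz qroot]
    by blast
qed

lemma Rch_top:
  assumes m: "m = Suc k"
  shows "Rch q \<beta> m n (n + int m) = Rch q \<beta> k n (n + int m) + \<beta> m n / qfact q m"
proof -
  have s: "m > 0" using m by simp
  have "Rch q \<beta> m n (n + int m) = mm (Rphi q m (\<beta> m)) (Rch q \<beta> k) n (n + int m)" by (simp add: m)
  also have "\<dots> = (if n \<in> {n..n + int m} then Rphi q m (\<beta> m) n n * Rch q \<beta> k n (n + int m) else 0)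
      + (if n + int m \<in> {n..n + int m} then Rphi q m (\<beta> m) n (n + int m) * Rch q \<beta> k (n + int m) (n + int m) else 0)"
    unfolding mm_def
  proof (rule sum_two_points)
    show "n \<noteq> n + int m" using s by simp
    fix u assume u: "u \<in> {n..n + int m}" "u \<noteq> n" "u \<noteq> n + int m"
    have "\<not> int m dvd (u - n)"
    proof
      assume "int m dvd (u - n)"
      moreover have "0 < u - n" "u - n < int m" using u by auto
      ultimately show False using zdvd_not_zless by blast
    qed
    then show "Rphi q m (\<beta> m) n u * Rch q \<beta> k u (n + int m) = 0" by (simp add: Rphi_ndvd)
  qed simp
  also have "\<dots> = Rch q \<beta> k n (n + int m) + \<beta> m n / qfact q m"
    using Rphi_mult[OF s, of q "\<beta> m" n 1] by (simp add: chain_diag bprods_def)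
  finally show ?thesis .
qed

lemma PhiMap_coef:
  assumes m: "m = Suc k"
  shows "PhiMap q \<beta> n m (n + int m, 0) = qfact q m * Rch q \<beta> k n (n + int m) + \<beta> m n"
proof -
  have nz: "qfact q m \<noteq> 0" by (rule qfact_nz[OF qnz qroot])
  have "PhiMap q \<beta> n m (n + int m, 0) = qfact q m * Rch q \<beta> m n (n + int m)"
    unfolding PhiMap_cf[OF qnz qroot] by (simp add: cf_def chain_diag qfact_0'[OF qnz qroot])
  also have "\<dots> = qfact q m * Rch q \<beta> k n (n + int m) + \<beta> m n"
    unfolding Rch_top[OF m] using nz by (simp add: distrib_left)
  finally show ?thesis .
qed

lemma PhiMap_inj:
  assumes b1: "\<beta> \<in> G_inf" and b2: "\<beta>' \<in> G_inf" and e: "PhiMap q \<beta> = PhiMap q \<beta>'"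
  shows "\<beta> = \<beta>'"
proof -
  have "\<forall>n. \<beta> j n = \<beta>' j n" for j
  proof (induction j rule: less_induct)
    case (less j)
    show ?case
    proof (cases j)
      case 0 then show ?thesis using b1 b2 by (simp add: G_inf_def)
    next
      case (Suc k)
      have R: "Rch q \<beta> k = Rch q \<beta>' k"
        by (rule Rch_dep) (use less Suc in \<open>auto simp: fun_eq_iff\<close>)
      show ?thesis
      proof
        fix n
        have "PhiMap q \<beta> n j (n + int j, 0) = PhiMap q \<beta>' n j (n + int j, 0)" using e by simp
        then show "\<beta> j n = \<beta>' j n" unfolding PhiMap_coef[OF Suc] R by simp
      qed
    qed
  qed
  then show ?thesis by (simp add: fun_eq_iff)
qed

lemma sum_split_ends:
  fixes f :: "nat \<Rightarrow> 'a::comm_monoid_add" and m :: nat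
  assumes "1 \<le> m"
  shows "(\<Sum>i\<le>m. f i) = f 0 + f m + (\<Sum>i\<in>{1..<m}. f i)"
proof -
  have e: "{..m} = insert 0 (insert m {1..<m})" using assms by auto
  show ?thesis unfolding e using assms by (simp add: add.assoc)
qed

lemma skew_zero:
  fixes d :: "'k hvec"
  assumes m: "2 \<le> m"
    and key: "\<And>a j b l. (if b = a + int j then d (a, j + l) * qbinom q (j + l) j else 0)
        = bas n 0 (a, j) * d (b, l) + d (a, j) * bas (n + int m) 0 (b, l)"
    and top: "d (n + int m, 0) = 0"
  shows "d = 0"
proof (rule ext)
  fix c
  obtain a :: int and p :: nat where c: "c = (a, p)" by (cases c)
  have "d (a, p) = 0"
  proof (cases "p \<ge> 2")
    case True
    then obtain p' where p': "p = Suc p'" by (cases p) auto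
    have "d (a, 1 + (p - 1)) * qbinom q (1 + (p - 1)) 1 = 0"
      using key[of "a + 1" a 1 "p - 1"] True by (simp add: bas_def)
    moreover have "1 + (p - 1) = p" using True by simp
    moreover have "qbinom q p 1 \<noteq> 0" unfolding p' qbinom_1[OF qnz qroot] by (rule qint_nz[OF qnz qroot]) simp
    ultimately show ?thesis by simp
  next
    case False
    then consider "p = 0" | "p = 1" by linarith
    then show ?thesis
    proof cases
      case 1
      have k0: "d (a, 0) = bas n 0 (a, 0) * d (a, 0) + d (a, 0) * bas (n + int m) 0 (a, 0)"
        using key[of a a 0 0] by (simp add: qbinom_0[OF qnz qroot])
      show ?thesis
      proof (cases "a = n + int m")
        case True then show ?thesis using top 1 by simp
      next
        case nm: False
        show ?thesis
        proof (cases "a = n")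
          case True
          have "0 = bas n 0 (n, 0) * d (n + int m, 0) + d (n, 0) * bas (n + int m) 0 (n + int m, 0)"
            using key[of "n + int m" n 0 0] m by simp
          then show ?thesis using True 1 top by (simp add: bas_def)
        next
          case False
          then show ?thesis using k0 nm 1 by (simp add: bas_def)
        qed
      qed
    next
      case 2
      have k1: "d (a, 1) = d (a, 1) * bas (n + int m) 0 (a + 1, 0)"
        using key[of "a + 1" a 1 0] qbinom_self[OF qnz qroot, of 1] by (simp add: bas_def)
      have k2: "d (a, 1) = bas n 0 (a, 0) * d (a, 1)"
        using key[of a a 0 1] by (simp add: bas_def qbinom_0[OF qnz qroot])
      show ?thesis
      proof (rule ccontr)
        assume nz: "d (a, p) \<noteq> 0"
        then have "a + 1 = n + int m" using k1 2 by (auto simp: bas_def split: if_splits)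
        moreover have "a = n" using k2 nz 2 by (auto simp: bas_def split: if_splits)
        ultimately show False using m by simp
      qed
    qed
  qed
  then show "d c = 0 c" by (simp add: c)
qed

lemma PhiMap_surj:
  assumes \<psi>: "\<psi> \<in> Aut_star q"
  shows "\<exists>\<beta>\<in>G_inf. PhiMap q \<beta> = \<psi>"
proof -
  have hH: "\<And>n m. \<psi> n m \<in> Hsp" and hD: "\<And>n m. Delta_ext q (\<psi> n m) = tmap \<psi> (Delta q n m)"
    and h0: "\<And>n. \<psi> n 0 = bas n 0" and h1: "\<And>n. \<exists>b. \<psi> n 1 = bas n 1 + smult b (bas (n + 1) 0 - bas n 0)"
  proof -
    have A: "is_coalg_aut q \<psi>" "\<forall>n. \<psi> n 0 = bas n 0" "\<forall>n. \<exists>b. \<psi> n 1 = bas n 1 + smult b (bas (n + 1) 0 - bas n 0)"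
      using \<psi> unfolding Aut_star_def by blast+
    then show "\<And>n m. \<psi> n m \<in> Hsp" "\<And>n m. Delta_ext q (\<psi> n m) = tmap \<psi> (Delta q n m)"
      "\<And>n. \<psi> n 0 = bas n 0" "\<And>n. \<exists>b. \<psi> n 1 = bas n 1 + smult b (bas (n + 1) 0 - bas n 0)"
      unfolding is_coalg_aut_def by blast+
  qed
  define \<beta> where "\<beta> = (\<lambda>j. Bseq q \<psi> j j)"
  have G: "\<beta> \<in> G_inf" by (simp add: G_inf_def \<beta>_def)
  have R: "Rch q \<beta> k = Rch q (Bseq q \<psi> k) k" for k
  proof (rule Rch_dep)
    fix i :: nat assume "1 \<le> i" "i \<le> k"
    then show "\<beta> i = Bseq q \<psi> k i" unfolding \<beta>_def using Bseq_stable[of i k q \<psi>] by simp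
  qed
  have coef: "\<And>n m. 1 \<le> m \<Longrightarrow> PhiMap q \<beta> n m (n + int m, 0) = \<psi> n m (n + int m, 0)"
  proof -
    fix m :: nat and n :: int assume "1 \<le> m"
    then obtain k where k: "m = Suc k" by (cases m) auto
    show "PhiMap q \<beta> n m (n + int m, 0) = \<psi> n m (n + int m, 0)"
      unfolding PhiMap_coef[OF k] R by (simp add: \<beta>_def k)
  qed
  let ?\<phi> = "PhiMap q \<beta>"
  have main: "\<forall>n. \<psi> n m = ?\<phi> n m" for m
  proof (induction m rule: less_induct)
    case (less m)
    show ?case
    proof
      fix n
      consider "m = 0" | "m = 1" | "2 \<le> m" by linarith
      then show "\<psi> n m = ?\<phi> n m"
      proof cases
        case 1 then show ?thesis by (simp add: h0 PhiMap_0[OF qnz qroot])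
      next
        case 2
        obtain b where b: "\<psi> n 1 = bas n 1 + smult b (bas (n + 1) 0 - bas n 0)" using h1 by blast
        have "b = \<psi> n 1 (n + 1, 0)" unfolding b by (simp add: bas_def)
        also have "\<dots> = ?\<phi> n 1 (n + 1, 0)" using coef[of 1 n] by simp
        also have "\<dots> = \<beta> 1 n" unfolding PhiMap_1[OF qnz qroot] by (simp add: bas_def)
        finally have "b = \<beta> 1 n" .
        then show ?thesis unfolding 2 b PhiMap_1[OF qnz qroot] by simp
      next
        case 3
        define d where "d = \<psi> n m - ?\<phi> n m"
        have IH: "\<And>i n'. i < m \<Longrightarrow> \<psi> n' i = ?\<phi> n' i" using less by blast
        have key: "(if b = a + int j then d (a, j + l) * qbinom q (j + l) j else 0)
            = bas n 0 (a, j) * d (b, l) + d (a, j) * bas (n + int m) 0 (b, l)" for a j b l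
        proof -
          define g where "g = (\<lambda>X i. qbinom q m i * X n i (a, j) * X (n + int i) (m - i) (b, l))"
          have E1: "(if b = a + int j then \<psi> n m (a, j + l) * qbinom q (j + l) j else 0) = (\<Sum>i\<le>m. g \<psi> i)"
            using arg_cong[OF hD[of n m], of "\<lambda>T. T ((a, j), (b, l))"]
            by (simp add: Delta_ext_pt[OF qnz qroot hH] tmap_Delta_pt[OF qnz qroot] g_def)
          have E2: "(if b = a + int j then ?\<phi> n m (a, j + l) * qbinom q (j + l) j else 0) = (\<Sum>i\<le>m. g ?\<phi> i)"
            using arg_cong[OF PhiMap_coalg[OF qnz qroot, of \<beta> n m], of "\<lambda>T. T ((a, j), (b, l))"]
            by (simp add: Delta_ext_pt[OF qnz qroot PhiMap_Hsp[OF qnz qroot]] tmap_Delta_pt[OF qnz qroot] g_def)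
          have mid: "(\<Sum>i\<in>{1..<m}. g \<psi> i) = (\<Sum>i\<in>{1..<m}. g ?\<phi> i)"
          proof (intro sum.cong refl)
            fix i assume i: "i \<in> {1..<m}"
            have "\<psi> n i = ?\<phi> n i" using i IH by simp
            moreover have "\<psi> (n + int i) (m - i) = ?\<phi> (n + int i) (m - i)" using i IH by simp
            ultimately show "g \<psi> i = g ?\<phi> i" by (simp add: g_def)
          qed
          have m1: "1 \<le> m" using 3 by simp
          have g0: "\<And>X. X n 0 = bas n 0 \<Longrightarrow> g X 0 = bas n 0 (a, j) * X n m (b, l)"
            by (simp add: g_def qbinom_0[OF qnz qroot])
          have gm: "\<And>X. X (n + int m) 0 = bas (n + int m) 0 \<Longrightarrow> g X m = X n m (a, j) * bas (n + int m) 0 (b, l)"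
            by (simp add: g_def qbinom_self[OF qnz qroot])
          have "(if b = a + int j then d (a, j + l) * qbinom q (j + l) j else 0)
              = (if b = a + int j then \<psi> n m (a, j + l) * qbinom q (j + l) j else 0)
              - (if b = a + int j then ?\<phi> n m (a, j + l) * qbinom q (j + l) j else 0)"
            by (simp add: d_def left_diff_distrib)
          also have "\<dots> = (g \<psi> 0 + g \<psi> m) - (g ?\<phi> 0 + g ?\<phi> m)"
            unfolding E1 E2 sum_split_ends[OF m1] mid by simp
          also have "\<dots> = bas n 0 (a, j) * d (b, l) + d (a, j) * bas (n + int m) 0 (b, l)"
            by (simp add: g0 gm h0 PhiMap_0[OF qnz qroot] d_def algebra_simps)
          finally show ?thesis .
        qed
        have top: "d (n + int m, 0) = 0" using coef[of m n] 3 by (simp add: d_def)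
        have "d = 0" by (rule skew_zero[OF 3 key top])
        then show ?thesis by (simp add: d_def)
      qed
    qed
  qed
  have "PhiMap q \<beta> = \<psi>" using main by (simp add: fun_eq_iff)
  then show ?thesis using G by blast
qed

theorem main_bij: "bij_betw (PhiMap q) G_inf (Aut_star q)"
proof -
  have "inj_on (PhiMap q) G_inf" by (rule inj_onI) (rule PhiMap_inj)
  moreover have "PhiMap q ` G_inf = Aut_star q"
  proof
    show "PhiMap q ` G_inf \<subseteq> Aut_star q" using PhiMap_in by blast
    show "Aut_star q \<subseteq> PhiMap q ` G_inf"
    proof
      fix \<psi> assume "\<psi> \<in> Aut_star q"
      then obtain \<beta> where "\<beta> \<in> G_inf" "PhiMap q \<beta> = \<psi>" using PhiMap_surj by blast
      then show "\<psi> \<in> PhiMap q ` G_inf" by blast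
    qed
  qed
  ultimately show ?thesis by (simp add: bij_betw_def)
qed

end

theorem theorem3p13:
  fixes q :: "'k::field"
  assumes "q \<noteq> 0"
    and "\<forall>n::nat. n > 0 \<longrightarrow> q ^ n \<noteq> 1"
  shows "bij_betw (PhiMap q) G_inf (Aut_star q)"
  by (rule main_bij[OF assms])

end
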